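(* Let $n\geq2$, $\Omega\subset\mathbb{C}^n$ a domain, $q\in\partial\Omega$, and assume there is a neighborhood $V$ of $q$ on which $\partial\Omega$ is strictly pseudoconvex of class $\mathcal{C}^k$, $k\geq\max(2n+9,3n+6)$, and that $\Omega$ carries a complete Kähler-Einstein metric with real-analytic potential $w'$ satisfying $\det(w'_{i\bar j})=e^{(n+1)w'}$ on $\Omega$, $w'=+\infty$ on $\partial\Omega$. Let $U,\varphi,(\varphi^{(l)})_{1\le l\le n+1}$ be as in the Setting below, fix $1\leq l\leq n+1$, and set on $\Omega\cap U$: $w:=-\log(-\varphi^{(l)})$, $F:=\log J(-\varphi^{(l)})$. Then $\dfrac{|\nabla F|^2_w}{(-\varphi)^{2l-1}}\in\mathcal{C}^{k-2l-3}(\overline{\Omega\cap U})$. In particular there exists $c_\nabla>0$ with $|\nabla F|^2_w\leq c_\nabla(-\varphi)^{2l-1}$ on $\Omega\cap U$.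
   Context: Fefferman functional: $J(\psi)=(-1)^n\det\begin{pmatrix}\psi&(\psi_{\bar j})\\{}^t(\psi_i)&(\psi_{i\bar j})\end{pmatrix}$. Setting: $U$ is a bounded domain containing $q$, $\varphi$ is a $\mathcal{C}^k$ strictly plurisubharmonic defining function of $\partial\Omega$ on a neighborhood of $\overline U$ with $\inf_{\overline U}|\nabla\varphi|>0$, and for each $1\le l\le n+1$: $\varphi^{(l)}\in\mathcal{C}^{k-2l}(\overline U)$; $\Omega\cap\overline U=\{\varphi^{(l)}<0\}\cap\overline U$; $\inf_{\overline U}|\nabla\varphi^{(l)}|>0$; $\varphi^{(l)}$ strictly plurisubharmonic on $\overline U$; $|1-J(-\varphi^{(l)})|\le\frac12$ on $\overline U$; $(J(-\varphi^{(l)})-1)/(-\varphi)^l\in\mathcal{C}^{k-2l-2}(\overline U)$; $\varphi^{(l)}/\varphi\in\mathcal{C}^{k-2l}(\overline U)$ and positive; $\log J(-\varphi^{(l)})/(-\varphi)^l\in\mathcal{C}^{k-2l-2}(\overline U)$. (Such data exist, obtained by Fefferman's iteration.) $|\nabla F|^2_w=w^{i\bar j}F_iF_{\bar j}$ with $(w^{i\bar j})=(w_{i\bar j})^{-1}$. "$w'=+\infty$ on $\partial\Omega$" means $w'\to+\infty$ at $\partial\Omega$. *)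

theory Defs
  imports "HOL-Analysis.Analysis"
begin

fun dd :: "('a::real_normed_vector) list \<Rightarrow> ('a \<Rightarrow> 'b::real_normed_vector) \<Rightarrow> 'a \<Rightarrow> 'b" where
  "dd [] f = f"
| "dd (v # vs) f = (\<lambda>x. frechet_derivative (dd vs f) (at x) v)"

fun Ck_on :: "nat \<Rightarrow> ('a::real_normed_vector) set \<Rightarrow> ('a \<Rightarrow> 'b::real_normed_vector) \<Rightarrow> bool" where
  "Ck_on 0 S f = continuous_on S f"
| "Ck_on (Suc m) S f = (f differentiable_on S \<and> (\<forall>v. Ck_on m S (\<lambda>x. frechet_derivative f (at x) v)))"

text \<open>C^m(closure A) for open A: C^m on A, and every derivative of order at most m
  extends continuously to closure A (i.e. has a limit at every point of closure A).\<close>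
definition Ck_cl :: "nat \<Rightarrow> ('a::real_normed_vector) set \<Rightarrow> ('a \<Rightarrow> 'b::real_normed_vector) \<Rightarrow> bool" where
  "Ck_cl m A f \<longleftrightarrow> Ck_on m A f \<and>
     (\<forall>vs. length vs \<le> m \<longrightarrow> (\<forall>x\<in>closure A. \<exists>L. (dd vs f \<longlongrightarrow> L) (at x within A)))"

definition on_cl :: "('a::topological_space) set \<Rightarrow> ('a \<Rightarrow> 'b::t2_space) \<Rightarrow> 'a \<Rightarrow> 'b" where
  "on_cl A g x = Lim (at x within A) g"

definition pd :: "'a::real_normed_vector \<Rightarrow> ('a \<Rightarrow> 'b::real_normed_vector) \<Rightarrow> 'a \<Rightarrow> 'b" where
  "pd v f x = frechet_derivative f (at x) v"

definition cplx :: "('a \<Rightarrow> real) \<Rightarrow> 'a \<Rightarrow> complex" where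
  "cplx f = (\<lambda>x. complex_of_real (f x))"

definition dz :: "'n::finite \<Rightarrow> (complex^'n \<Rightarrow> complex) \<Rightarrow> complex^'n \<Rightarrow> complex" where
  "dz j g x = (pd (axis j 1) g x - \<i> * pd (axis j \<i>) g x) / 2"

definition dzb :: "'n::finite \<Rightarrow> (complex^'n \<Rightarrow> complex) \<Rightarrow> complex^'n \<Rightarrow> complex" where
  "dzb j g x = (pd (axis j 1) g x + \<i> * pd (axis j \<i>) g x) / 2"

definition rz :: "(complex^'n::finite \<Rightarrow> real) \<Rightarrow> 'n \<Rightarrow> complex^'n \<Rightarrow> complex" where
  "rz f j x = dz j (cplx f) x"

definition rzb :: "(complex^'n::finite \<Rightarrow> real) \<Rightarrow> 'n \<Rightarrow> complex^'n \<Rightarrow> complex" where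
  "rzb f j x = dzb j (cplx f) x"

definition rH :: "(complex^'n::finite \<Rightarrow> real) \<Rightarrow> complex^'n \<Rightarrow> 'n \<Rightarrow> 'n \<Rightarrow> complex" where
  "rH f x i j = dz i (\<lambda>y. dzb j (cplx f) y) x"

definition cHess :: "(complex^'n::finite \<Rightarrow> real) \<Rightarrow> complex^'n \<Rightarrow> complex^'n^'n" where
  "cHess f x = (\<chi> i j. rH f x i j)"

definition rgrad :: "(complex^'n::finite \<Rightarrow> real) \<Rightarrow> complex^'n \<Rightarrow> real" where
  "rgrad f x = sqrt (\<Sum>j\<in>UNIV. (pd (axis j 1) f x)\<^sup>2 + (pd (axis j \<i>) f x)\<^sup>2)"

definition spsh_on :: "(complex^'n::finite) set \<Rightarrow> (complex^'n \<Rightarrow> real) \<Rightarrow> bool" where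
  "spsh_on S f \<longleftrightarrow> (\<forall>x\<in>S. \<forall>\<xi>::complex^'n. \<xi> \<noteq> 0 \<longrightarrow>
      Re (\<Sum>i\<in>UNIV. \<Sum>j\<in>UNIV. rH f x i j * \<xi>$i * cnj (\<xi>$j)) > 0)"

definition spsh_cl :: "(complex^'n::finite) set \<Rightarrow> (complex^'n \<Rightarrow> real) \<Rightarrow> bool" where
  "spsh_cl A f \<longleftrightarrow> (\<forall>x\<in>closure A. \<forall>\<xi>::complex^'n. \<xi> \<noteq> 0 \<longrightarrow>
      Re (\<Sum>i\<in>UNIV. \<Sum>j\<in>UNIV. on_cl A (\<lambda>y. rH f y i j) x * \<xi>$i * cnj (\<xi>$j)) > 0)"

text \<open>Fefferman functional J(psi) = (-1)^n det [[psi, (psi_{bar j})], [(psi_i), (psi_{i bar j})]].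
  Row/column index None is the extra (0-th) index. For real psi the matrix is Hermitian,
  so the determinant is real; we take its real part.\<close>
definition fefJ :: "(complex^'n::finite \<Rightarrow> real) \<Rightarrow> complex^'n \<Rightarrow> real" where
  "fefJ \<psi> x = Re ((-1) ^ CARD('n) * det ((\<chi> a b. (case a of
        None \<Rightarrow> (case b of None \<Rightarrow> complex_of_real (\<psi> x) | Some j \<Rightarrow> rzb \<psi> j x)
      | Some i \<Rightarrow> (case b of None \<Rightarrow> rz \<psi> i x | Some j \<Rightarrow> rH \<psi> x i j))) :: complex^'n option^'n option))"

definition gradw :: "(complex^'n::finite \<Rightarrow> real) \<Rightarrow> (complex^'n \<Rightarrow> real) \<Rightarrow> complex^'n \<Rightarrow> real" where
  "gradw w F x = Re (\<Sum>i\<in>UNIV. \<Sum>j\<in>UNIV. matrix_inv (cHess w x) $ i $ j * rz F i x * rzb F j x)"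

definition rc :: "'n \<times> bool \<Rightarrow> complex^'n \<Rightarrow> real" where
  "rc c z = (if snd c then Im (z $ fst c) else Re (z $ fst c))"

definition real_analytic_on :: "(complex^'n::finite) set \<Rightarrow> (complex^'n \<Rightarrow> real) \<Rightarrow> bool" where
  "real_analytic_on S f \<longleftrightarrow> (\<forall>x\<in>S. \<exists>r>0. \<exists>a :: ('n \<times> bool \<Rightarrow> nat) \<Rightarrow> real.
      \<forall>y\<in>ball x r. ((\<lambda>\<alpha>. a \<alpha> * (\<Prod>c\<in>UNIV. rc c (y - x) ^ \<alpha> c)) has_sum f y) UNIV)"

definition klen :: "(complex^'n::finite \<Rightarrow> real) \<Rightarrow> (real \<Rightarrow> complex^'n) \<Rightarrow> real" where
  "klen w \<gamma> = integral {0..1} (\<lambda>t. sqrt (Re (\<Sum>i\<in>UNIV. \<Sum>j\<in>UNIV.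
      rH w (\<gamma> t) i j * vector_derivative \<gamma> (at t) $ i * cnj (vector_derivative \<gamma> (at t) $ j))))"

definition kdist :: "(complex^'n::finite \<Rightarrow> real) \<Rightarrow> (complex^'n) set \<Rightarrow> complex^'n \<Rightarrow> complex^'n \<Rightarrow> real" where
  "kdist w S x y = Inf (klen w ` {\<gamma>. \<gamma> C1_differentiable_on {0..1} \<and> path_image \<gamma> \<subseteq> S
                                     \<and> pathstart \<gamma> = x \<and> pathfinish \<gamma> = y})"

definition complete_kaehler :: "(complex^'n::finite) set \<Rightarrow> (complex^'n \<Rightarrow> real) \<Rightarrow> bool" where
  "complete_kaehler S w \<longleftrightarrow> spsh_on S w \<and> Ck_on 2 S w \<and>
     (\<forall>X. (\<forall>m. X m \<in> S) \<and> (\<forall>e>0. \<exists>N. \<forall>m\<ge>N. \<forall>p\<ge>N. kdist w S (X m) (X p) < e)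
          \<longrightarrow> (\<exists>L\<in>S. (\<lambda>m. kdist w S (X m) L) \<longlonglongrightarrow> 0))"

end

theory Submission
  imports Defs
begin

lemma dd_snoc: "dd (vs @ [v]) f = dd vs (\<lambda>x. frechet_derivative f (at x) v)"
  by (induction vs) auto

definition extl :: "('a::topological_space) set \<Rightarrow> ('a \<Rightarrow> 'b::topological_space) \<Rightarrow> bool" where
  "extl A f \<longleftrightarrow> (\<forall>x\<in>closure A. \<exists>L. (f \<longlongrightarrow> L) (at x within A))"

lemma Ck_cl_0: "Ck_cl 0 A f \<longleftrightarrow> continuous_on A f \<and> extl A f"
  by (auto simp: Ck_cl_def extl_def)

lemma Ck_cl_Suc: "Ck_cl (Suc m) A f \<longleftrightarrow> extl A f \<and> f differentiable_on A \<and>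
    (\<forall>v. Ck_cl m A (\<lambda>x. frechet_derivative f (at x) v))"
proof
  assume H: "Ck_cl (Suc m) A f"
  show "extl A f \<and> f differentiable_on A \<and> (\<forall>v. Ck_cl m A (\<lambda>x. frechet_derivative f (at x) v))"
  proof (intro conjI allI)
    show "extl A f" using H unfolding Ck_cl_def extl_def
      by (metis dd.simps(1) le0 list.size(3))
    show "f differentiable_on A" using H by (simp add: Ck_cl_def)
    fix v
    show "Ck_cl m A (\<lambda>x. frechet_derivative f (at x) v)"
      unfolding Ck_cl_def
    proof (intro conjI allI impI)
      show "Ck_on m A (\<lambda>x. frechet_derivative f (at x) v)" using H by (simp add: Ck_cl_def)
      fix vs :: "'a list" assume "length vs \<le> m"
      then have "length (vs @ [v]) \<le> Suc m" by simp
      then show "\<forall>x\<in>closure A. \<exists>L. (dd vs (\<lambda>x. frechet_derivative f (at x) v) \<longlongrightarrow> L) (at x within A)"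
        using H unfolding Ck_cl_def by (metis dd_snoc)
    qed
  qed
next
  assume H: "extl A f \<and> f differentiable_on A \<and> (\<forall>v. Ck_cl m A (\<lambda>x. frechet_derivative f (at x) v))"
  show "Ck_cl (Suc m) A f"
    unfolding Ck_cl_def
  proof (intro conjI allI impI)
    show "Ck_on (Suc m) A f" using H by (simp add: Ck_cl_def)
    fix vs :: "'a list" assume L: "length vs \<le> Suc m"
    show "\<forall>x\<in>closure A. \<exists>L. (dd vs f \<longlongrightarrow> L) (at x within A)"
    proof (cases vs rule: rev_exhaust)
      case Nil then show ?thesis using H by (simp add: extl_def)
    next
      case (snoc us v)
      then have "length us \<le> m" using L by simp
      then show ?thesis using H unfolding snoc Ck_cl_def by (metis dd_snoc)
    qed
  qed
qed

lemma diff_at: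
  assumes "open A" "f differentiable_on A" "x \<in> A"
  shows "(f has_derivative frechet_derivative f (at x)) (at x)"
  using assms by (metis at_within_open differentiable_on_def frechet_derivative_works)

lemma Ck_cl_mono_Suc: "Ck_cl (Suc m) A f \<Longrightarrow> Ck_cl m A f"
proof (induction m arbitrary: f)
  case 0
  then show ?case by (simp add: Ck_cl_Suc Ck_cl_0 differentiable_imp_continuous_on)
next
  case (Suc m)
  then show ?case unfolding Ck_cl_Suc[of m] Ck_cl_Suc[of "Suc m"] by blast
qed

lemma Ck_cl_mono: "m \<le> m' \<Longrightarrow> Ck_cl m' A f \<Longrightarrow> Ck_cl m A f"
proof (induction m' arbitrary: m)
  case 0 then show ?case by simp
next
  case (Suc m') then show ?case
    using Ck_cl_mono_Suc le_SucE by metis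
qed

lemma Ck_cl_extl: "Ck_cl m A f \<Longrightarrow> extl A f"
  using Ck_cl_mono[of 0 m] Ck_cl_0 by blast

lemma Ck_cl_cont: "Ck_cl m A f \<Longrightarrow> continuous_on A f"
  using Ck_cl_mono[of 0 m] Ck_cl_0 by blast

lemma extl_cong:
  assumes "\<forall>x\<in>A. f x = g x" "extl A f"
  shows "extl A g"
  unfolding extl_def
proof
  fix x assume x: "x \<in> closure A"
  then obtain L where L: "(f \<longlongrightarrow> L) (at x within A)" using assms(2) extl_def by blast
  have "eventually (\<lambda>y. f y = g y) (at x within A)"
    using assms(1) by (auto simp: eventually_at_filter)
  then have "(g \<longlongrightarrow> L) (at x within A)" using L tendsto_cong by blast
  then show "\<exists>L. (g \<longlongrightarrow> L) (at x within A)" by blast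
qed

lemma Ck_cl_cong:
  assumes "open A" "\<forall>x\<in>A. f x = g x" "Ck_cl m A f"
  shows "Ck_cl m A g"
  using assms(2,3)
proof (induction m arbitrary: f g)
  case 0
  have c: "continuous_on A f" "extl A f" using 0(2) unfolding Ck_cl_0 by auto
  have "continuous_on A g" using continuous_on_cong[of A A f g] c(1) 0(1) by blast
  moreover have "extl A g" using 0(1) c(2) by (rule extl_cong)
  ultimately show ?case unfolding Ck_cl_0 by blast
next
  case (Suc m)
  have c: "extl A f" "f differentiable_on A" "\<And>v. Ck_cl m A (\<lambda>x. frechet_derivative f (at x) v)"
    using Suc.prems(2) unfolding Ck_cl_Suc by auto
  have ex: "extl A g" using Suc.prems(1) c(1) by (rule extl_cong)
  have dg: "g differentiable_on A"
    unfolding differentiable_on_def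
  proof
    fix x assume x: "x \<in> A"
    have "(f has_derivative frechet_derivative f (at x)) (at x)" using diff_at[OF assms(1) c(2) x] .
    then have "(g has_derivative frechet_derivative f (at x)) (at x)"
      by (rule has_derivative_transform_within_open[OF _ assms(1) x]) (use Suc.prems(1) in blast)
    then show "g differentiable at x within A"
      unfolding differentiable_def using has_derivative_at_withinI by blast
  qed
  have "Ck_cl m A (\<lambda>x. frechet_derivative g (at x) v)" for v
  proof -
    have "\<forall>x\<in>A. frechet_derivative f (at x) v = frechet_derivative g (at x) v"
    proof
      fix x assume x: "x \<in> A"
      have fd: "f differentiable at x" using diff_at[OF assms(1) c(2) x] unfolding differentiable_def by blast
      have "frechet_derivative f (at x) = frechet_derivative g (at x)"
        apply (rule frechet_derivative_transform_within_open[OF fd assms(1) x])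
        using Suc.prems(1) by blast
      then show "frechet_derivative f (at x) v = frechet_derivative g (at x) v" by simp
    qed
    then show ?thesis using c(3)[of v] by (rule Suc.IH)
  qed
  then show ?case using ex dg unfolding Ck_cl_Suc by blast
qed

lemma Ck_cl_subset:
  assumes "B \<subseteq> A" "Ck_cl m A f"
  shows "Ck_cl m B f"
  using assms(2)
proof (induction m arbitrary: f)
  case 0
  then have c: "continuous_on A f" "extl A f" unfolding Ck_cl_0 by auto
  have "extl B f" unfolding extl_def
  proof
    fix x assume "x \<in> closure B"
    then have "x \<in> closure A" using assms(1) closure_mono by blast
    then obtain L where "(f \<longlongrightarrow> L) (at x within A)" using c(2) unfolding extl_def by blast
    then show "\<exists>L. (f \<longlongrightarrow> L) (at x within B)" using tendsto_within_subset[OF _ assms(1)] by blast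
  qed
  then show ?case unfolding Ck_cl_0 using continuous_on_subset[OF c(1) assms(1)] by blast
next
  case (Suc m)
  then have c: "extl A f" "f differentiable_on A" "\<And>v. Ck_cl m A (\<lambda>x. frechet_derivative f (at x) v)"
    unfolding Ck_cl_Suc by auto
  have "extl B f" unfolding extl_def
  proof
    fix x assume "x \<in> closure B"
    then have "x \<in> closure A" using assms(1) closure_mono by blast
    then obtain L where "(f \<longlongrightarrow> L) (at x within A)" using c(1) unfolding extl_def by blast
    then show "\<exists>L. (f \<longlongrightarrow> L) (at x within B)" using tendsto_within_subset[OF _ assms(1)] by blast
  qed
  then show ?case unfolding Ck_cl_Suc using differentiable_on_subset[OF c(2) assms(1)] Suc.IH c(3) by blast
qed

lemma Ck_on_cl:
  assumes "open N" "closure A \<subseteq> N" "Ck_on m N f"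
  shows "Ck_cl m A f"
  using assms(3)
proof (induction m arbitrary: f)
  case 0
  have c: "continuous_on N f" using 0 by simp
  have "extl A f" unfolding extl_def
  proof
    fix x assume "x \<in> closure A"
    then have "x \<in> N" using assms(2) by blast
    then have "(f \<longlongrightarrow> f x) (at x)" using c assms(1) continuous_on_eq_continuous_at isContD by blast
    then show "\<exists>L. (f \<longlongrightarrow> L) (at x within A)" using tendsto_within_subset by blast
  qed
  moreover have "continuous_on A f" using c assms(2) closure_subset continuous_on_subset by blast
  ultimately show ?case by (simp add: Ck_cl_0)
next
  case (Suc m)
  have d: "f differentiable_on N" using Suc.prems by simp
  then have c: "continuous_on N f" using differentiable_imp_continuous_on by blast
  have "extl A f" unfolding extl_def
  proof
    fix x assume "x \<in> closure A"
    then have "x \<in> N" using assms(2) by blast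
    then have "(f \<longlongrightarrow> f x) (at x)" using c assms(1) continuous_on_eq_continuous_at isContD by blast
    then show "\<exists>L. (f \<longlongrightarrow> L) (at x within A)" using tendsto_within_subset by blast
  qed
  moreover have "f differentiable_on A" using d assms(2) closure_subset differentiable_on_subset by blast
  ultimately show ?case using Suc by (simp add: Ck_cl_Suc)
qed

lemma Ck_cl_SucI:
  assumes "open A" "extl A h" "\<And>x. x\<in>A \<Longrightarrow> (h has_derivative D x) (at x)"
    "\<And>v. Ck_cl m A (\<lambda>x. D x v)"
  shows "Ck_cl (Suc m) A h"
proof -
  have "h differentiable_on A" unfolding differentiable_on_def differentiable_def
  proof
    fix x assume "x \<in> A"
    show "\<exists>D'. (h has_derivative D') (at x within A)"
      using has_derivative_at_withinI[OF assms(3)[OF \<open>x \<in> A\<close>]] by blast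
  qed
  moreover have "Ck_cl m A (\<lambda>x. frechet_derivative h (at x) v)" for v
  proof -
    have "\<forall>x\<in>A. D x v = frechet_derivative h (at x) v"
    proof
      fix x assume "x \<in> A"
      from frechet_derivative_at[OF assms(3)[OF this]] show "D x v = frechet_derivative h (at x) v" by simp
    qed
    then show ?thesis by (rule Ck_cl_cong[OF assms(1) _ assms(4)])
  qed
  ultimately show ?thesis using assms(2) unfolding Ck_cl_Suc by blast
qed

lemma Ck_cl_SucD:
  assumes "open A" "Ck_cl (Suc m) A f"
  shows "extl A f" "\<And>x. x\<in>A \<Longrightarrow> (f has_derivative frechet_derivative f (at x)) (at x)"
    "\<And>v. Ck_cl m A (\<lambda>x. frechet_derivative f (at x) v)"
proof -
  have c: "extl A f" "f differentiable_on A" "\<And>v. Ck_cl m A (\<lambda>x. frechet_derivative f (at x) v)"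
    using assms(2) unfolding Ck_cl_Suc by auto
  show "extl A f" by (rule c(1))
  show "\<And>v. Ck_cl m A (\<lambda>x. frechet_derivative f (at x) v)" by (rule c(3))
  show "\<And>x. x\<in>A \<Longrightarrow> (f has_derivative frechet_derivative f (at x)) (at x)"
    by (rule diff_at[OF assms(1) c(2)])
qed

lemma extl_const: "extl A (\<lambda>x. c)"
  unfolding extl_def by (auto intro: tendsto_const)

lemma Ck_cl_const: "open A \<Longrightarrow> Ck_cl m A (\<lambda>x. c :: 'b::real_normed_vector)"
proof (induction m arbitrary: c)
  case 0 then show ?case by (simp add: Ck_cl_0 extl_const)
next
  case (Suc m)
  show ?case
  proof (rule Ck_cl_SucI[OF Suc.prems extl_const, where D="\<lambda>x v. 0"])
    show "((\<lambda>x. c) has_derivative (\<lambda>v. 0)) (at x)" for x by (rule has_derivative_const)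
    show "Ck_cl m A (\<lambda>x. 0::'b)" for v by (rule Suc.IH[OF Suc.prems])
  qed
qed

lemma extl_linear: "bounded_linear L \<Longrightarrow> extl A f \<Longrightarrow> extl A (\<lambda>x. L (f x))"
  unfolding extl_def
proof
  fix x assume L: "bounded_linear L" and e: "\<forall>x\<in>closure A. \<exists>L. (f \<longlongrightarrow> L) (at x within A)" and x: "x \<in> closure A"
  then obtain M where "(f \<longlongrightarrow> M) (at x within A)" by blast
  from bounded_linear.tendsto[OF L this] show "\<exists>M. ((\<lambda>x. L (f x)) \<longlongrightarrow> M) (at x within A)" by blast
qed

lemma Ck_cl_linear:
  assumes L: "bounded_linear L" and A: "open A"
  shows "Ck_cl m A f \<Longrightarrow> Ck_cl m A (\<lambda>x. L (f x))"
proof (induction m arbitrary: f)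
  case 0
  then have c: "continuous_on A f" "extl A f" unfolding Ck_cl_0 by auto
  show ?case unfolding Ck_cl_0 using bounded_linear.continuous_on[OF L c(1)] extl_linear[OF L c(2)] by blast
next
  case (Suc m)
  note D = Ck_cl_SucD[OF A Suc.prems]
  show ?case
  proof (rule Ck_cl_SucI[OF A extl_linear[OF L D(1)], where D="\<lambda>x v. L (frechet_derivative f (at x) v)"])
    fix x assume "x \<in> A"
    show "((\<lambda>x. L (f x)) has_derivative (\<lambda>v. L (frechet_derivative f (at x) v))) (at x)"
      by (rule bounded_linear.has_derivative[OF L D(2)[OF \<open>x \<in> A\<close>]])
  next
    fix v show "Ck_cl m A (\<lambda>x. L (frechet_derivative f (at x) v))" by (rule Suc.IH[OF D(3)])
  qed
qed

lemma extl_add: "extl A f \<Longrightarrow> extl A g \<Longrightarrow> extl A (\<lambda>x. f x + g x :: 'b::topological_monoid_add)"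
  unfolding extl_def
proof
  fix x assume e: "\<forall>x\<in>closure A. \<exists>L. (f \<longlongrightarrow> L) (at x within A)" "\<forall>x\<in>closure A. \<exists>L. (g \<longlongrightarrow> L) (at x within A)" and x: "x \<in> closure A"
  then obtain M N where "(f \<longlongrightarrow> M) (at x within A)" "(g \<longlongrightarrow> N) (at x within A)" by blast
  from tendsto_add[OF this] show "\<exists>M. ((\<lambda>x. f x + g x) \<longlongrightarrow> M) (at x within A)" by blast
qed

lemma extl_mult: "extl A f \<Longrightarrow> extl A g \<Longrightarrow> extl A (\<lambda>x. f x * g x :: 'b::real_normed_algebra)"
  unfolding extl_def
proof
  fix x assume e: "\<forall>x\<in>closure A. \<exists>L. (f \<longlongrightarrow> L) (at x within A)" "\<forall>x\<in>closure A. \<exists>L. (g \<longlongrightarrow> L) (at x within A)" and x: "x \<in> closure A"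
  then obtain M N where "(f \<longlongrightarrow> M) (at x within A)" "(g \<longlongrightarrow> N) (at x within A)" by blast
  from tendsto_mult[OF this] show "\<exists>M. ((\<lambda>x. f x * g x) \<longlongrightarrow> M) (at x within A)" by blast
qed

lemma Ck_cl_add:
  assumes A: "open A"
  shows "Ck_cl m A f \<Longrightarrow> Ck_cl m A g \<Longrightarrow> Ck_cl m A (\<lambda>x. f x + g x)"
proof (induction m arbitrary: f g)
  case 0
  then have c: "continuous_on A f" "extl A f" "continuous_on A g" "extl A g" unfolding Ck_cl_0 by auto
  show ?case unfolding Ck_cl_0 using extl_add[OF c(2,4)] continuous_on_add[OF c(1,3)] by blast
next
  case (Suc m)
  note Df = Ck_cl_SucD[OF A Suc.prems(1)] and Dg = Ck_cl_SucD[OF A Suc.prems(2)]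
  show ?case
  proof (rule Ck_cl_SucI[OF A extl_add[OF Df(1) Dg(1)], where D="\<lambda>x v. frechet_derivative f (at x) v + frechet_derivative g (at x) v"])
    fix x assume "x \<in> A"
    show "((\<lambda>x. f x + g x) has_derivative (\<lambda>v. frechet_derivative f (at x) v + frechet_derivative g (at x) v)) (at x)"
      by (rule has_derivative_add[OF Df(2)[OF \<open>x \<in> A\<close>] Dg(2)[OF \<open>x \<in> A\<close>]])
  next
    fix v show "Ck_cl m A (\<lambda>x. frechet_derivative f (at x) v + frechet_derivative g (at x) v)"
      by (rule Suc.IH[OF Df(3) Dg(3)])
  qed
qed

lemma Ck_cl_mult:
  fixes f g :: "'a::real_normed_vector \<Rightarrow> 'b::real_normed_algebra"
  assumes A: "open A"
  shows "Ck_cl m A f \<Longrightarrow> Ck_cl m A g \<Longrightarrow> Ck_cl m A (\<lambda>x. f x * g x)"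
proof (induction m arbitrary: f g)
  case 0
  then have c: "continuous_on A f" "extl A f" "continuous_on A g" "extl A g" unfolding Ck_cl_0 by auto
  show ?case unfolding Ck_cl_0 using extl_mult[OF c(2,4)] continuous_on_mult[OF c(1,3)] by blast
next
  case (Suc m)
  note Df = Ck_cl_SucD[OF A Suc.prems(1)] and Dg = Ck_cl_SucD[OF A Suc.prems(2)]
  have f: "Ck_cl m A f" by (rule Ck_cl_mono_Suc[OF Suc.prems(1)])
  have g: "Ck_cl m A g" by (rule Ck_cl_mono_Suc[OF Suc.prems(2)])
  show ?case
  proof (rule Ck_cl_SucI[OF A extl_mult[OF Df(1) Dg(1)], where D="\<lambda>x v. f x * frechet_derivative g (at x) v + frechet_derivative f (at x) v * g x"])
    fix x assume "x \<in> A"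
    show "((\<lambda>x. f x * g x) has_derivative (\<lambda>v. f x * frechet_derivative g (at x) v + frechet_derivative f (at x) v * g x)) (at x)"
      by (rule has_derivative_mult[OF Df(2)[OF \<open>x \<in> A\<close>] Dg(2)[OF \<open>x \<in> A\<close>]])
  next
    fix v show "Ck_cl m A (\<lambda>x. f x * frechet_derivative g (at x) v + frechet_derivative f (at x) v * g x)"
      by (rule Ck_cl_add[OF A Suc.IH[OF f Dg(3)] Suc.IH[OF Df(3) g]])
  qed
qed

lemma bl_uminus: "bounded_linear (\<lambda>x::'b::real_normed_vector. - x)"
  by (rule bounded_linear_minus[OF bounded_linear_ident])

lemma Ck_cl_uminus: "open A \<Longrightarrow> Ck_cl m A f \<Longrightarrow> Ck_cl m A (\<lambda>x. - f x)"
  by (rule Ck_cl_linear[OF bl_uminus])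

lemma Ck_cl_diff: "open A \<Longrightarrow> Ck_cl m A f \<Longrightarrow> Ck_cl m A g \<Longrightarrow> Ck_cl m A (\<lambda>x. f x - g x)"
  using Ck_cl_add[of A m f "\<lambda>x. - g x"] Ck_cl_uminus[of A m g] by simp

lemma extl_inverse:
  fixes g :: "'a::topological_space \<Rightarrow> 'b::real_normed_div_algebra"
  assumes "extl A g" "\<forall>x\<in>closure A. \<forall>L. (g \<longlongrightarrow> L) (at x within A) \<longrightarrow> L \<noteq> 0"
  shows "extl A (\<lambda>x. inverse (g x))"
  unfolding extl_def
proof
  fix x assume x: "x \<in> closure A"
  then obtain M where M: "(g \<longlongrightarrow> M) (at x within A)" using assms(1) unfolding extl_def by blast
  then have "M \<noteq> 0" using assms(2) x by blast
  from tendsto_inverse[OF M this] show "\<exists>M. ((\<lambda>x. inverse (g x)) \<longlongrightarrow> M) (at x within A)" by blast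
qed

lemma Ck_cl_inverse:
  fixes g :: "'a::real_normed_vector \<Rightarrow> 'b::real_normed_field"
  assumes A: "open A" and nz: "\<forall>x\<in>A. g x \<noteq> 0"
    and lim: "\<forall>x\<in>closure A. \<forall>L. (g \<longlongrightarrow> L) (at x within A) \<longrightarrow> L \<noteq> 0"
  shows "Ck_cl m A g \<Longrightarrow> Ck_cl m A (\<lambda>x. inverse (g x))"
proof (induction m)
  case 0
  then have c: "continuous_on A g" "extl A g" unfolding Ck_cl_0 by auto
  show ?case unfolding Ck_cl_0 using extl_inverse[OF c(2) lim] continuous_on_inverse[OF c(1) nz] by blast
next
  case (Suc m)
  note D = Ck_cl_SucD[OF A Suc.prems]
  have g: "Ck_cl m A g" by (rule Ck_cl_mono_Suc[OF Suc.prems])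
  note I = Suc.IH[OF g]
  show ?case
  proof (rule Ck_cl_SucI[OF A extl_inverse[OF D(1) lim], where D="\<lambda>x v. - (inverse (g x) * frechet_derivative g (at x) v * inverse (g x))"])
    fix x assume x: "x \<in> A"
    show "((\<lambda>x. inverse (g x)) has_derivative (\<lambda>v. - (inverse (g x) * frechet_derivative g (at x) v * inverse (g x)))) (at x)"
      by (rule Deriv.has_derivative_inverse[OF nz[rule_format, OF x] D(2)[OF x]])
  next
    fix v show "Ck_cl m A (\<lambda>x. - (inverse (g x) * frechet_derivative g (at x) v * inverse (g x)))"
      by (rule Ck_cl_uminus[OF A Ck_cl_mult[OF A Ck_cl_mult[OF A I D(3)] I]])
  qed
qed

lemma Ck_cl_divide:
  fixes f g :: "'a::real_normed_vector \<Rightarrow> 'b::real_normed_field"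
  assumes A: "open A" and nz: "\<forall>x\<in>A. g x \<noteq> 0"
    and lim: "\<forall>x\<in>closure A. \<forall>L. (g \<longlongrightarrow> L) (at x within A) \<longrightarrow> L \<noteq> 0"
    and f: "Ck_cl m A f" and g: "Ck_cl m A g"
  shows "Ck_cl m A (\<lambda>x. f x / g x)"
  unfolding divide_inverse by (rule Ck_cl_mult[OF A f Ck_cl_inverse[OF A nz lim g]])

lemma Ck_cl_sum:
  fixes f :: "'i \<Rightarrow> 'a::real_normed_vector \<Rightarrow> 'b::real_normed_vector"
  assumes A: "open A" and S: "finite S"
  shows "(\<And>i. i \<in> S \<Longrightarrow> Ck_cl m A (f i)) \<Longrightarrow> Ck_cl m A (\<lambda>x. \<Sum>i\<in>S. f i x)"
  using S
proof (induction S rule: finite_induct)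
  case empty
  show ?case using Ck_cl_const[OF A, of m "0::'b"] by simp
next
  case (insert a S)
  have "Ck_cl m A (\<lambda>x. f a x + (\<Sum>i\<in>S. f i x))"
    by (rule Ck_cl_add[OF A]) (use insert in auto)
  then show ?case using insert(1,2) by simp
qed

lemma Ck_cl_prod:
  fixes f :: "'i \<Rightarrow> 'a::real_normed_vector \<Rightarrow> 'b::real_normed_field"
  assumes A: "open A" and S: "finite S"
  shows "(\<And>i. i \<in> S \<Longrightarrow> Ck_cl m A (f i)) \<Longrightarrow> Ck_cl m A (\<lambda>x. \<Prod>i\<in>S. f i x)"
  using S
proof (induction S rule: finite_induct)
  case empty
  show ?case using Ck_cl_const[OF A, of m "1::'b"] by simp
next
  case (insert a S)
  have "Ck_cl m A (\<lambda>x. f a x * (\<Prod>i\<in>S. f i x))"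
    by (rule Ck_cl_mult[OF A]) (use insert in auto)
  then show ?case using insert(1,2) by simp
qed

lemma Ck_cl_pd: "open A \<Longrightarrow> Ck_cl (Suc m) A f \<Longrightarrow> Ck_cl m A (\<lambda>x. frechet_derivative f (at x) v)"
  using Ck_cl_SucD(3) by blast

lemma extl_bounded:
  fixes f :: "'a::metric_space \<Rightarrow> 'b::real_normed_vector"
  assumes cA: "compact (closure A)" and e: "extl A f"
  shows "\<exists>M. \<forall>y\<in>A. norm (f y) \<le> M"
proof -
  have "\<forall>x\<in>closure A. \<exists>d>0. \<exists>B. \<forall>y\<in>A. 0 < dist y x \<and> dist y x < d \<longrightarrow> norm (f y) \<le> B"
  proof
    fix x assume x: "x \<in> closure A"
    then obtain L where L: "(f \<longlongrightarrow> L) (at x within A)" using e unfolding extl_def by blast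
    then obtain d where d: "d > 0" "\<forall>y\<in>A. 0 < dist y x \<and> dist y x < d \<longrightarrow> dist (f y) L < 1"
      unfolding Lim_within by (meson zero_less_one)
    have "\<forall>y\<in>A. 0 < dist y x \<and> dist y x < d \<longrightarrow> norm (f y) \<le> norm L + 1"
    proof (intro ballI impI)
      fix y assume "y \<in> A" "0 < dist y x \<and> dist y x < d"
      then have "dist (f y) L < 1" using d(2) by blast
      then show "norm (f y) \<le> norm L + 1" using norm_triangle_ineq2[of "f y" L]
        by (simp add: dist_norm)
    qed
    then show "\<exists>d>0. \<exists>B. \<forall>y\<in>A. 0 < dist y x \<and> dist y x < d \<longrightarrow> norm (f y) \<le> B" using d(1) by blast
  qed
  then obtain d B where dB: "\<And>x. x \<in> closure A \<Longrightarrow> d x > 0 \<and> (\<forall>y\<in>A. 0 < dist y x \<and> dist y x < d x \<longrightarrow> norm (f y) \<le> B x)"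
    by metis
  have cov: "closure A \<subseteq> (\<Union>x\<in>closure A. ball x (d x))"
    using dB by force
  obtain T where T: "T \<subseteq> closure A" "finite T" "closure A \<subseteq> (\<Union>x\<in>T. ball x (d x))"
    using compactE_image[OF cA _ cov] by blast
  define M where "M = (\<Sum>x\<in>T. \<bar>B x\<bar> + norm (f x))"
  have "norm (f y) \<le> M" if y: "y \<in> A" for y
  proof -
    have "y \<in> closure A" using y closure_subset by blast
    then obtain x where x: "x \<in> T" "dist x y < d x" using T(3) by auto
    have xc: "x \<in> closure A" using x(1) T(1) by blast
    have le: "\<bar>B x\<bar> + norm (f x) \<le> M" unfolding M_def
      by (rule member_le_sum[OF x(1)]) (auto intro: add_nonneg_nonneg T(2))+
    show ?thesis
    proof (cases "y = x")
      case True then show ?thesis using le by simp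
    next
      case False
      then have "norm (f y) \<le> B x" using dB[OF xc] y x(2) by (simp add: dist_commute)
      moreover have "B x \<le> \<bar>B x\<bar>" by simp
      moreover have "0 \<le> norm (f x)" by simp
      ultimately show ?thesis using le by linarith
    qed
  qed
  then show ?thesis by blast
qed

lemma Ck_cl_pdf: "open A \<Longrightarrow> Ck_cl (Suc m) A f \<Longrightarrow> Ck_cl m A (pd v f)"
proof -
  assume "open A" "Ck_cl (Suc m) A f"
  from Ck_cl_pd[OF this, of v] show ?thesis unfolding pd_def[abs_def] by simp
qed

lemma Ck_cl_cplx: "open A \<Longrightarrow> Ck_cl m A f \<Longrightarrow> Ck_cl m A (cplx f)"
  unfolding cplx_def by (rule Ck_cl_linear[OF bounded_linear_of_real])

lemma Ck_cl_Re: "open A \<Longrightarrow> Ck_cl m A f \<Longrightarrow> Ck_cl m A (\<lambda>x. Re (f x))"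
  by (rule Ck_cl_linear[OF bounded_linear_Re])

lemma Ck_cl_cnj: "open A \<Longrightarrow> Ck_cl m A f \<Longrightarrow> Ck_cl m A (\<lambda>x. cnj (f x))"
  by (rule Ck_cl_linear[OF bounded_linear_cnj])

lemma Ck_cl_cmult: "open A \<Longrightarrow> Ck_cl m A f \<Longrightarrow> Ck_cl m A (\<lambda>x. c * f x :: 'b::real_normed_algebra)"
  by (rule Ck_cl_mult[OF _ Ck_cl_const])

lemma Ck_cl_dz:
  assumes A: "open A" and g: "Ck_cl (Suc m) A g"
  shows "Ck_cl m A (dz j g)" "Ck_cl m A (dzb j g)"
proof -
  have "dz j g = (\<lambda>x. (1/2) * (pd (axis j 1) g x - \<i> * pd (axis j \<i>) g x))"
    by (auto simp: dz_def fun_eq_iff)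
  moreover have "dzb j g = (\<lambda>x. (1/2) * (pd (axis j 1) g x + \<i> * pd (axis j \<i>) g x))"
    by (auto simp: dzb_def fun_eq_iff)
  moreover have P: "Ck_cl m A (pd v g)" for v by (rule Ck_cl_pdf[OF A g])
  moreover have "Ck_cl m A (\<lambda>x. (1/2) * (pd (axis j 1) g x - \<i> * pd (axis j \<i>) g x))"
    by (rule Ck_cl_cmult[OF A Ck_cl_diff[OF A P Ck_cl_cmult[OF A P]]])
  moreover have "Ck_cl m A (\<lambda>x. (1/2) * (pd (axis j 1) g x + \<i> * pd (axis j \<i>) g x))"
    by (rule Ck_cl_cmult[OF A Ck_cl_add[OF A P Ck_cl_cmult[OF A P]]])
  ultimately show "Ck_cl m A (dz j g)" "Ck_cl m A (dzb j g)" by simp_all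
qed

lemma Ck_cl_det:
  fixes f :: "'n::finite \<Rightarrow> 'n \<Rightarrow> 'a::real_normed_vector \<Rightarrow> complex"
  assumes A: "open A" and f: "\<And>p q. Ck_cl m A (f p q)"
  shows "Ck_cl m A (\<lambda>y. det (\<chi> p q. f p q y))"
proof -
  have "Ck_cl m A (\<lambda>y. \<Sum>s\<in>{s. s permutes (UNIV :: 'n set)}. of_int (sign s) * (\<Prod>i\<in>UNIV. f i (s i) y))"
  proof (rule Ck_cl_sum[OF A finite_permutations[OF finite_class.finite_UNIV]])
    fix s show "Ck_cl m A (\<lambda>y. of_int (sign s) * (\<Prod>i\<in>UNIV. f i (s i) y))"
      by (rule Ck_cl_cmult[OF A Ck_cl_prod[OF A finite_class.finite_UNIV f]])
  qed
  then show ?thesis unfolding det_def by simp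
qed

lemma tendsto_det:
  fixes f :: "'n::finite \<Rightarrow> 'n \<Rightarrow> 'a \<Rightarrow> complex"
  assumes "\<And>p q. (f p q \<longlongrightarrow> L p q) F"
  shows "((\<lambda>y. det (\<chi> p q. f p q y)) \<longlongrightarrow> det (\<chi> p q. L p q)) F"
  unfolding det_def using assms by (auto intro!: tendsto_intros)

lemma pd_cplx:
  assumes "(f has_derivative f') (at y)"
  shows "pd v (cplx f) y = complex_of_real (f' v)"
proof -
  have "((\<lambda>x. complex_of_real (f x)) has_derivative (\<lambda>v. complex_of_real (f' v))) (at y)"
    by (rule bounded_linear.has_derivative[OF bounded_linear_of_real assms])
  from fun_cong[OF frechet_derivative_at[OF this, symmetric], of v] show ?thesis unfolding pd_def cplx_def .
qed

lemma dz_has: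
  assumes "(g has_derivative g') (at y)"
  shows "dz j g y = (g' (axis j 1) - \<i> * g' (axis j \<i>)) / 2"
    "dzb j g y = (g' (axis j 1) + \<i> * g' (axis j \<i>)) / 2"
  using frechet_derivative_at[OF assms] unfolding dz_def dzb_def pd_def by simp_all

definition hinv :: "complex^'n::finite^'n \<Rightarrow> complex^'n^'n" where
  "hinv H = (\<chi> k j. det (\<chi> p q. if q = k then (axis j 1)$p else H$p$q) / det H)"

lemma hinv_right:
  fixes H :: "complex^'n::finite^'n"
  assumes "det H \<noteq> 0"
  shows "H ** hinv H = mat 1"
proof -
  have col: "H *v (\<chi> k. hinv H $ k $ j) = axis j 1" for j
  proof -
    have "(\<chi> k. hinv H $ k $ j) = (\<chi> k. det (\<chi> p q. if q = k then (axis j 1)$p else H$p$q) / det H)"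
      unfolding hinv_def by simp
    then show ?thesis using cramer[OF assms, of "\<chi> k. hinv H $ k $ j" "axis j 1"] by simp
  qed
  show ?thesis
    unfolding vec_eq_iff
  proof (intro allI)
    fix i j
    have "(H ** hinv H) $ i $ j = (H *v (\<chi> k. hinv H $ k $ j)) $ i"
      by (simp add: matrix_matrix_mult_def matrix_vector_mult_def)
    also have "\<dots> = (if i = j then 1 else 0)" using col[of j] by (simp add: axis_def)
    finally show "(H ** hinv H) $ i $ j = mat 1 $ i $ j" by (simp add: mat_def)
  qed
qed

lemma matrix_inv_eq:
  fixes A M :: "'a::field^'n::finite^'n"
  assumes "A ** M = mat 1"
  shows "matrix_inv A = M"
proof -
  have MA: "M ** A = mat 1" using assms matrix_left_right_inverse by blast
  have ex: "A ** M = mat 1 \<and> M ** A = mat 1" using assms MA by blast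
  have "A ** matrix_inv A = mat 1 \<and> matrix_inv A ** A = mat 1"
    unfolding matrix_inv_def by (rule someI[of _ M]) (rule ex)
  then have "matrix_inv A = matrix_inv A ** (A ** M)" using assms by (simp add: matrix_mul_rid)
  also have "\<dots> = (matrix_inv A ** A) ** M" by (simp add: matrix_mul_assoc)
  also have "\<dots> = M" using \<open>A ** matrix_inv A = mat 1 \<and> matrix_inv A ** A = mat 1\<close> by (simp add: matrix_mul_lid)
  finally show ?thesis .
qed

lemma posdef_ker:
  fixes H :: "complex^'n::finite^'n"
  assumes pd: "\<forall>\<xi>::complex^'n. \<xi> \<noteq> 0 \<longrightarrow> Re (\<Sum>i\<in>UNIV. \<Sum>j\<in>UNIV. H$i$j * \<xi>$i * cnj (\<xi>$j)) > 0"
    and y: "y \<noteq> 0"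
  shows "Re (\<Sum>i\<in>UNIV. cnj (y$i) * (H *v y)$i) > 0"
proof -
  define \<xi> where "\<xi> = (\<chi> i. cnj (y$i))"
  have "\<xi> \<noteq> 0" using y unfolding \<xi>_def by (metis complex_cnj_cnj complex_cnj_zero vec_eq_iff vec_lambda_beta zero_index)
  then have "Re (\<Sum>i\<in>UNIV. \<Sum>j\<in>UNIV. H$i$j * \<xi>$i * cnj (\<xi>$j)) > 0" using pd by blast
  moreover have "(\<Sum>i\<in>UNIV. \<Sum>j\<in>UNIV. H$i$j * \<xi>$i * cnj (\<xi>$j)) = (\<Sum>i\<in>UNIV. cnj (y$i) * (H *v y)$i)"
    unfolding \<xi>_def matrix_vector_mult_def by (simp add: sum_distrib_left mult_ac)
  ultimately show ?thesis by simp
qed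

lemma posdef_det:
  fixes H :: "complex^'n::finite^'n"
  assumes pd: "\<forall>\<xi>::complex^'n. \<xi> \<noteq> 0 \<longrightarrow> Re (\<Sum>i\<in>UNIV. \<Sum>j\<in>UNIV. H$i$j * \<xi>$i * cnj (\<xi>$j)) > 0"
  shows "det H \<noteq> 0"
proof -
  have "\<forall>y. H *v y = 0 \<longrightarrow> y = 0"
  proof (intro allI impI)
    fix y assume "H *v y = 0"
    then show "y = 0" using posdef_ker[OF pd, of y] by (cases "y = 0") auto
  qed
  then have "\<exists>B. B ** H = mat 1" using matrix_left_invertible_ker by blast
  then show ?thesis using invertible_det_nz invertible_left_inverse by blast
qed

lemma posdef_beta:
  fixes H Hi :: "complex^'n::finite^'n"
  assumes pd: "\<forall>\<xi>::complex^'n. \<xi> \<noteq> 0 \<longrightarrow> Re (\<Sum>i\<in>UNIV. \<Sum>j\<in>UNIV. H$i$j * \<xi>$i * cnj (\<xi>$j)) > 0"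
    and HH: "H ** Hi = mat 1" and a: "a \<noteq> 0"
  shows "Re (\<Sum>q\<in>UNIV. \<Sum>p\<in>UNIV. cnj (a$q) * Hi$q$p * a$p) > 0"
proof -
  define y where "y = Hi *v a"
  have Hy: "H *v y = a" unfolding y_def using HH by (simp add: matrix_vector_mul_assoc)
  have "y \<noteq> 0" using a Hy by auto
  from posdef_ker[OF pd this] have "Re (\<Sum>i\<in>UNIV. cnj (y$i) * a$i) > 0" using Hy by simp
  moreover have "(\<Sum>i\<in>UNIV. cnj (y$i) * a$i) = cnj (\<Sum>i\<in>UNIV. y$i * cnj (a$i))" by simp
  moreover have "Re (cnj z) = Re z" for z by simp
  moreover have "(\<Sum>i\<in>UNIV. y$i * cnj (a$i)) = (\<Sum>q\<in>UNIV. \<Sum>p\<in>UNIV. cnj (a$q) * Hi$q$p * a$p)"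
    unfolding y_def matrix_vector_mult_def by (simp add: sum_distrib_left sum_distrib_right mult_ac)
  ultimately show ?thesis by metis
qed

lemma SM_inv:
  fixes H Hi :: "complex^'n::finite^'n" and a b :: "complex^'n" and h \<beta> :: complex
  assumes HH: "H ** Hi = mat 1" and h: "h \<noteq> 0" and d: "\<beta> + h \<noteq> 0"
    and \<beta>: "\<beta> = (\<Sum>q\<in>UNIV. \<Sum>p\<in>UNIV. b$q * Hi$q$p * a$p)"
  shows "(\<chi> i j. H$i$j / h + a$i * b$j / h^2) **
         (\<chi> i j. h * (Hi$i$j - (\<Sum>p\<in>UNIV. Hi$i$p * a$p) * (\<Sum>q\<in>UNIV. b$q * Hi$q$j) / (\<beta> + h))) = mat 1"
proof -
  define u where "u k = (\<Sum>p\<in>UNIV. Hi$k$p * a$p)" for k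
  define v where "v j = (\<Sum>q\<in>UNIV. b$q * Hi$q$j)" for j
  define D where "D = \<beta> + h"
  have D0: "D \<noteq> 0" using d unfolding D_def .
  have HHij: "(\<Sum>k\<in>UNIV. H$i$k * Hi$k$j) = (if i = j then 1 else 0)" for i j
  proof -
    have "(H ** Hi)$i$j = (\<Sum>k\<in>UNIV. H$i$k * Hi$k$j)" by (simp add: matrix_matrix_mult_def)
    then show ?thesis using HH by (simp add: mat_def)
  qed
  have Hu: "(\<Sum>k\<in>UNIV. H$i$k * u k) = a$i" for i
  proof -
    have "(\<Sum>k\<in>UNIV. H$i$k * u k) = (\<Sum>k\<in>UNIV. \<Sum>p\<in>UNIV. H$i$k * Hi$k$p * a$p)"
      unfolding u_def by (simp add: sum_distrib_left mult.assoc)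
    also have "\<dots> = (\<Sum>p\<in>UNIV. \<Sum>k\<in>UNIV. H$i$k * Hi$k$p * a$p)" by (rule sum.swap)
    also have "\<dots> = (\<Sum>p\<in>UNIV. (\<Sum>k\<in>UNIV. H$i$k * Hi$k$p) * a$p)" by (simp add: sum_distrib_right)
    also have "\<dots> = (\<Sum>p\<in>UNIV. (if i = p then a$p else 0))"
      by (rule sum.cong) (simp_all add: HHij)
    also have "\<dots> = a$i" by simp
    finally show ?thesis .
  qed
  have bu: "(\<Sum>k\<in>UNIV. b$k * u k) = \<beta>"
    unfolding u_def \<beta> by (simp add: sum_distrib_left mult.assoc)
  show ?thesis
    unfolding vec_eq_iff
  proof (intro allI)
    fix i j
    have pt: "(H$i$k / h + a$i * b$k / h^2) * (h * (Hi$k$j - u k * v j / D)) =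
        H$i$k * Hi$k$j - H$i$k * u k * (v j / D) + (a$i / h) * (b$k * Hi$k$j) - (a$i / h) * (v j / D) * (b$k * u k)" for k
      using h D0 by (simp add: field_simps power2_eq_square)
    have "((\<chi> i j. H$i$j / h + a$i * b$j / h^2) ** (\<chi> i j. h * (Hi$i$j - u i * v j / D)))$i$j
        = (\<Sum>k\<in>UNIV. (H$i$k / h + a$i * b$k / h^2) * (h * (Hi$k$j - u k * v j / D)))"
      by (simp add: matrix_matrix_mult_def)
    also have "\<dots> = (\<Sum>k\<in>UNIV. H$i$k * Hi$k$j) - (\<Sum>k\<in>UNIV. H$i$k * u k) * (v j / D)
        + (a$i / h) * (\<Sum>k\<in>UNIV. b$k * Hi$k$j) - (a$i / h) * (v j / D) * (\<Sum>k\<in>UNIV. b$k * u k)"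
      unfolding pt by (simp add: sum.distrib sum_subtractf sum_distrib_left sum_distrib_right sum_divide_distrib)
    also have "\<dots> = (if i = j then 1 else 0) - a$i * (v j / D) + (a$i / h) * v j - (a$i / h) * (v j / D) * \<beta>"
      unfolding HHij Hu bu v_def ..
    also have "\<dots> = (if i = j then 1 else 0)"
    proof -
      have be: "\<beta> = D - h" unfolding D_def by simp
      show ?thesis using h D0 unfolding be by (cases "i = j") (simp_all add: field_simps)
    qed
    finally show "((\<chi> i j. H$i$j / h + a$i * b$j / h^2) **
         (\<chi> i j. h * (Hi$i$j - (\<Sum>p\<in>UNIV. Hi$i$p * a$p) * (\<Sum>q\<in>UNIV. b$q * Hi$q$j) / (\<beta> + h))))$i$j = mat 1 $i$j"
      unfolding u_def v_def D_def by (simp add: mat_def)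
  qed
qed

lemma sum2_split:
  fixes X :: "'i \<Rightarrow> 'j \<Rightarrow> 'a::comm_ring_1"
  assumes "finite I" "finite J"
  shows "(\<Sum>i\<in>I. \<Sum>j\<in>J. c1 * X i j - c2 * (P i * R j)) = c1 * (\<Sum>i\<in>I. \<Sum>j\<in>J. X i j) - c2 * ((\<Sum>i\<in>I. P i) * (\<Sum>j\<in>J. R j))"
proof -
  have "(\<Sum>i\<in>I. \<Sum>j\<in>J. c1 * X i j - c2 * (P i * R j)) = (\<Sum>i\<in>I. \<Sum>j\<in>J. c1 * X i j) - (\<Sum>i\<in>I. \<Sum>j\<in>J. c2 * (P i * R j))"
    by (simp add: sum_subtractf)
  also have "(\<Sum>i\<in>I. \<Sum>j\<in>J. c1 * X i j) = c1 * (\<Sum>i\<in>I. \<Sum>j\<in>J. X i j)" by (simp add: sum_distrib_left)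
  also have "(\<Sum>i\<in>I. \<Sum>j\<in>J. c2 * (P i * R j)) = c2 * (\<Sum>i\<in>I. \<Sum>j\<in>J. P i * R j)"
    by (simp only: sum_distrib_left)
  also have "\<dots> = c2 * ((\<Sum>i\<in>I. P i) * (\<Sum>j\<in>J. R j))"
    by (simp only: sum_product)
  finally show ?thesis .
qed

lemma quad_form:
  fixes Hi :: "complex^'n::finite^'n" and a b V W :: "'n \<Rightarrow> complex" and h t D :: complex
  shows "(\<Sum>i\<in>UNIV. \<Sum>j\<in>UNIV. (h * (Hi$i$j - (\<Sum>p\<in>UNIV. Hi$i$p * a p) * (\<Sum>q\<in>UNIV. b q * Hi$q$j) / D)) * (t * V i) * (t * W j))
       = t * t * h * ((\<Sum>i\<in>UNIV. \<Sum>j\<in>UNIV. Hi$i$j * V i * W j)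
           - (\<Sum>i\<in>UNIV. (\<Sum>p\<in>UNIV. Hi$i$p * a p) * V i) * (\<Sum>j\<in>UNIV. (\<Sum>q\<in>UNIV. b q * Hi$q$j) * W j) / D)"
proof -
  define u where "u i = (\<Sum>p\<in>UNIV. Hi$i$p * a p)" for i
  define v where "v j = (\<Sum>q\<in>UNIV. b q * Hi$q$j)" for j
  have pt: "(h * (Hi$i$j - u i * v j / D)) * (t * V i) * (t * W j)
      = (t * t * h) * (Hi$i$j * V i * W j) - (t * t * h / D) * ((u i * V i) * (v j * W j))" for i j
    by (simp add: field_simps)
  have "(\<Sum>i\<in>UNIV. \<Sum>j\<in>UNIV. (h * (Hi$i$j - u i * v j / D)) * (t * V i) * (t * W j))
      = (t * t * h) * (\<Sum>i\<in>UNIV. \<Sum>j\<in>UNIV. Hi$i$j * V i * W j) - (t * t * h / D) * ((\<Sum>i\<in>UNIV. u i * V i) * (\<Sum>j\<in>UNIV. v j * W j))"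
    unfolding pt by (rule sum2_split) simp_all
  also have "\<dots> = t * t * h * ((\<Sum>i\<in>UNIV. \<Sum>j\<in>UNIV. Hi$i$j * V i * W j) - (\<Sum>i\<in>UNIV. u i * V i) * (\<Sum>j\<in>UNIV. v j * W j) / D)"
    by (simp add: field_simps)
  finally show ?thesis unfolding u_def v_def .
qed

lemma cplx_has_derivative:
  "(f has_derivative f') (at y) \<Longrightarrow> (cplx f has_derivative (\<lambda>v. complex_of_real (f' v))) (at y)"
  unfolding cplx_def by (rule bounded_linear.has_derivative[OF bounded_linear_of_real])

lemma rz_formula:
  fixes r :: "complex^'n::finite \<Rightarrow> real"
  assumes "(r has_derivative r') (at y)"
  shows "rz r j y = (complex_of_real (r' (axis j 1)) - \<i> * complex_of_real (r' (axis j \<i>))) / 2"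
    "rzb r j y = (complex_of_real (r' (axis j 1)) + \<i> * complex_of_real (r' (axis j \<i>))) / 2"
  unfolding rz_def rzb_def using dz_has[OF cplx_has_derivative[OF assms]] by simp_all

lemma w_has_derivative:
  fixes r :: "'a::real_normed_vector \<Rightarrow> real"
  assumes "(r has_derivative r') (at y)" "r y < 0"
  shows "((\<lambda>y. - ln (- r y)) has_derivative (\<lambda>v. r' v / (- r y))) (at y)"
proof -
  have d1: "((\<lambda>y. - r y) has_derivative (\<lambda>v. - r' v)) (at y)" by (rule has_derivative_minus[OF assms(1)])
  have p: "0 < - r y" using assms(2) by simp
  have "((\<lambda>y. ln (- r y)) has_derivative (\<lambda>v. - r' v * inverse (- r y))) (at y)"
    using has_derivative_ln[of "\<lambda>y. - r y" y "\<lambda>v. - r' v" UNIV] p d1 by simp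
  from has_derivative_minus[OF this] show ?thesis
    by (simp add: divide_inverse)
qed

lemma dzb_w:
  fixes r :: "complex^'n::finite \<Rightarrow> real"
  assumes "(r has_derivative r') (at y)" "r y < 0"
  shows "dzb j (cplx (\<lambda>y. - ln (- r y))) y = rzb r j y / complex_of_real (- r y)"
proof -
  have "dzb j (cplx (\<lambda>y. - ln (- r y))) y =
     (complex_of_real (r' (axis j 1) / (- r y)) + \<i> * complex_of_real (r' (axis j \<i>) / (- r y))) / 2"
    using dz_has(2)[OF cplx_has_derivative[OF w_has_derivative[OF assms]]] by simp
  also have "\<dots> = rzb r j y / complex_of_real (- r y)"
    unfolding rz_formula(2)[OF assms(1)] using assms(2) by (simp add: field_simps)
  finally show ?thesis .
qed

lemma rH_w:
  fixes r :: "complex^'n::finite \<Rightarrow> real"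
  assumes B: "open B" and y: "y \<in> B"
    and rd: "\<And>z. z \<in> B \<Longrightarrow> (r has_derivative frechet_derivative r (at z)) (at z)"
    and neg: "\<And>z. z \<in> B \<Longrightarrow> r z < 0"
    and bd: "(rzb r j has_derivative frechet_derivative (rzb r j) (at y)) (at y)"
  shows "rH (\<lambda>y. - ln (- r y)) y i j = rH r y i j / complex_of_real (- r y)
           + rz r i y * rzb r j y / (complex_of_real (- r y))^2"
proof -
  define r' where "r' = frechet_derivative r (at y)"
  define b where "b = rzb r j"
  define b' where "b' = frechet_derivative b (at y)"
  define h where "h = (\<lambda>z. complex_of_real (- r z))"
  define h' where "h' = (\<lambda>v. complex_of_real (- r' v))"
  define g2 where "g2 = (\<lambda>z. b z / h z)"
  have hd: "(h has_derivative h') (at y)"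
    unfolding h_def h'_def r'_def
    by (rule bounded_linear.has_derivative[OF bounded_linear_of_real has_derivative_minus[OF rd[OF y]]])
  have hy: "h y \<noteq> 0" unfolding h_def using neg[OF y] by simp
  have bdd: "(b has_derivative b') (at y)" unfolding b_def b'_def by (rule bd)
  have g2d: "(g2 has_derivative (\<lambda>v. - b y * (inverse (h y) * h' v * inverse (h y)) + b' v / h y)) (at y)"
    unfolding g2_def by (rule has_derivative_divide[OF bdd hd hy])
  have eqB: "\<And>z. z \<in> B \<Longrightarrow> g2 z = dzb j (cplx (\<lambda>y. - ln (- r y))) z"
    unfolding g2_def b_def h_def using dzb_w[OF rd neg] by simp
  have fd: "frechet_derivative g2 (at y) = frechet_derivative (\<lambda>z. dzb j (cplx (\<lambda>y. - ln (- r y))) z) (at y)"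
    by (rule frechet_derivative_transform_within_open[OF _ B y eqB]) (use g2d differentiable_def in blast)
  have "rH (\<lambda>y. - ln (- r y)) y i j = dz i g2 y"
    unfolding rH_def dz_def pd_def fd ..
  also have "\<dots> = ((- b y * (inverse (h y) * h' (axis i 1) * inverse (h y)) + b' (axis i 1) / h y)
        - \<i> * (- b y * (inverse (h y) * h' (axis i \<i>) * inverse (h y)) + b' (axis i \<i>) / h y)) / 2"
    by (rule dz_has(1)[OF g2d])
  also have "\<dots> = - b y * (inverse (h y))^2 * ((h' (axis i 1) - \<i> * h' (axis i \<i>)) / 2)
       + ((b' (axis i 1) - \<i> * b' (axis i \<i>)) / 2) / h y"
    using hy by (simp add: field_simps power2_eq_square)
  also have "(h' (axis i 1) - \<i> * h' (axis i \<i>)) / 2 = - rz r i y"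
    unfolding h'_def rz_formula(1)[OF rd[OF y]] r'_def by (simp add: field_simps)
  also have "(b' (axis i 1) - \<i> * b' (axis i \<i>)) / 2 = rH r y i j"
    unfolding b'_def b_def rH_def dz_def pd_def rzb_def[abs_def] ..
  finally show ?thesis unfolding b_def h_def using hy by (simp add: field_simps power2_eq_square)
qed

lemma rz_F:
  fixes F G1 \<phi> :: "complex^'n::finite \<Rightarrow> real"
  assumes U: "open U" and y: "y \<in> U" and FU: "\<And>z. z \<in> U \<Longrightarrow> F z = G1 z * (- \<phi> z) ^ l"
    and l: "1 \<le> l"
    and G1d: "(G1 has_derivative G1') (at y)" and \<phi>d: "(\<phi> has_derivative \<phi>') (at y)"
  shows "rz F i y = complex_of_real ((- \<phi> y) ^ (l - 1)) *
           ((complex_of_real (G1' (axis i 1) * (- \<phi> y) - real l * G1 y * \<phi>' (axis i 1))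
             - \<i> * complex_of_real (G1' (axis i \<i>) * (- \<phi> y) - real l * G1 y * \<phi>' (axis i \<i>))) / 2)"
    "rzb F i y = complex_of_real ((- \<phi> y) ^ (l - 1)) *
           ((complex_of_real (G1' (axis i 1) * (- \<phi> y) - real l * G1 y * \<phi>' (axis i 1))
             + \<i> * complex_of_real (G1' (axis i \<i>) * (- \<phi> y) - real l * G1 y * \<phi>' (axis i \<i>))) / 2)"
proof -
  define g' where "g' = (\<lambda>v. G1 y * (of_nat l * (- \<phi>' v) * (- \<phi> y) ^ (l - 1)) + G1' v * (- \<phi> y) ^ l)"
  have md: "((\<lambda>z. - \<phi> z) has_derivative (\<lambda>v. - \<phi>' v)) (at y)" by (rule has_derivative_minus[OF \<phi>d])
  have gd: "((\<lambda>z. G1 z * (- \<phi> z) ^ l) has_derivative g') (at y)"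
    unfolding g'_def by (rule has_derivative_mult[OF G1d has_derivative_power[OF md]])
  have Fd: "(F has_derivative g') (at y)"
    by (rule has_derivative_transform_within_open[OF gd U y]) (use FU in simp)
  have pw: "(- \<phi> y) ^ l = (- \<phi> y) ^ (l - 1) * (- \<phi> y)"
  proof -
    obtain k where "l = Suc k" using l by (cases l) auto
    then show ?thesis by (simp add: power_Suc2)
  qed
  have g'e: "g' v = (- \<phi> y) ^ (l - 1) * (G1' v * (- \<phi> y) - real l * G1 y * \<phi>' v)" for v
    unfolding g'_def pw by (simp add: algebra_simps)
  show "rz F i y = complex_of_real ((- \<phi> y) ^ (l - 1)) *
           ((complex_of_real (G1' (axis i 1) * (- \<phi> y) - real l * G1 y * \<phi>' (axis i 1))
             - \<i> * complex_of_real (G1' (axis i \<i>) * (- \<phi> y) - real l * G1 y * \<phi>' (axis i \<i>))) / 2)"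
    unfolding rz_formula(1)[OF Fd] g'e by (simp add: algebra_simps)
  show "rzb F i y = complex_of_real ((- \<phi> y) ^ (l - 1)) *
           ((complex_of_real (G1' (axis i 1) * (- \<phi> y) - real l * G1 y * \<phi>' (axis i 1))
             + \<i> * complex_of_real (G1' (axis i \<i>) * (- \<phi> y) - real l * G1 y * \<phi>' (axis i \<i>))) / 2)"
    unfolding rz_formula(2)[OF Fd] g'e by (simp add: algebra_simps)
qed

lemma nontriv:
  fixes B :: "'a::perfect_space set"
  assumes "open B" "x \<in> closure B"
  shows "at x within B \<noteq> bot"
proof -
  have "x islimpt B"
  proof (cases "x \<in> B")
    case True
    then have "x \<in> interior B" using assms(1) interior_open by blast
    then show ?thesis by (rule interior_limit_point)
  next
    case False
    then show ?thesis using assms(2) unfolding closure_def by blast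
  qed
  then show ?thesis using trivial_limit_within by blast
qed

lemma on_cl_restrict:
  fixes g :: "'a::perfect_space \<Rightarrow> 'b::t2_space"
  assumes B: "open B" "B \<subseteq> U" and x: "x \<in> closure B" and e: "extl U g"
    and L: "(g \<longlongrightarrow> L) (at x within B)"
  shows "on_cl U g x = (L :: 'b::t2_space)"
proof -
  have xU: "x \<in> closure U" using x B(2) closure_mono by blast
  obtain L' where L': "(g \<longlongrightarrow> L') (at x within U)" using e xU unfolding extl_def by blast
  have nb: "at x within B \<noteq> bot" by (rule nontriv[OF B(1) x])
  have "(g \<longlongrightarrow> L') (at x within B)" by (rule tendsto_within_subset[OF L' B(2)])
  then have LL: "L = L'" using tendsto_unique[OF nb L] by blast
  have nu: "\<not> trivial_limit (at x within U)"
  proof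
    assume "trivial_limit (at x within U)"
    then have "at x within U = bot" by simp
    moreover have "at x within B \<le> at x within U" by (rule at_le[OF B(2)])
    ultimately show False using nb by (simp add: bot_unique)
  qed
  show ?thesis unfolding on_cl_def LL by (rule tendsto_Lim[OF nu L'])
qed

lemma cont_lim:
  fixes g :: "'a::t2_space \<Rightarrow> 'b::t2_space"
  assumes "open B" "x \<in> B" "continuous_on B g"
  shows "(g \<longlongrightarrow> g x) (at x within B)"
proof -
  have "continuous (at x within B) g" using assms(2,3) continuous_on_eq_continuous_within by blast
  then show ?thesis unfolding continuous_within .
qed

lemma on_cl_eq:
  fixes g :: "'a::{perfect_space,t2_space} \<Rightarrow> 'b::t2_space"
  assumes "open U" "x \<in> U" "continuous_on U g"
  shows "on_cl U g x = (g x :: 'b::t2_space)"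
proof -
  have "x \<in> closure U" using assms(2) closure_subset by blast
  have "\<not> trivial_limit (at x within U)" using nontriv[OF assms(1) \<open>x \<in> closure U\<close>] by simp
  then show ?thesis unfolding on_cl_def by (rule tendsto_Lim[OF _ cont_lim[OF assms]])
qed

lemma nz_from_lim:
  fixes g :: "'a::t2_space \<Rightarrow> 'b::{t2_space,zero}"
  assumes "open B" "continuous_on B g" "\<forall>x\<in>closure B. \<forall>L. (g \<longlongrightarrow> L) (at x within B) \<longrightarrow> L \<noteq> 0"
  shows "\<forall>x\<in>B. g x \<noteq> 0"
proof
  fix x assume x: "x \<in> B"
  then have "x \<in> closure B" using closure_subset by blast
  then show "g x \<noteq> 0" using assms(3) cont_lim[OF assms(1) x assms(2)] by blast
qed

lemma limB:
  assumes "\<forall>y\<in>B. f y = g y" "(g \<longlongrightarrow> L) (at x within B)"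
  shows "(f \<longlongrightarrow> L) (at x within B)"
proof -
  have "eventually (\<lambda>y. g y = f y) (at x within B)"
    using assms(1) by (auto simp: eventually_at_filter)
  then show ?thesis using assms(2) tendsto_cong by blast
qed

lemma Re_scale: "e \<noteq> 0 \<Longrightarrow> Re (complex_of_real (g * e) * Z) / e = Re (complex_of_real g * Z)"
proof -
  assume e: "e \<noteq> 0"
  have "Re (complex_of_real (g * e) * Z) = g * e * Re Z" by simp
  moreover have "Re (complex_of_real g * Z) = g * Re Z" by simp
  ultimately show ?thesis using e by simp
qed

theorem proposition3p1:
  fixes \<Omega> U V N :: "(complex^'n::finite) set"
    and q :: "complex^'n"
    and k l :: nat
    and w' \<phi> :: "complex^'n \<Rightarrow> real"
    and \<phi>s :: "nat \<Rightarrow> complex^'n \<Rightarrow> real"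
  assumes n2: "CARD('n) \<ge> 2"
    and dom: "open \<Omega>" "connected \<Omega>"
    and qb: "q \<in> frontier \<Omega>"
    and V: "open V" "q \<in> V"
    and spc: "\<exists>\<rho>. Ck_on k V \<rho> \<and> (\<forall>x\<in>V. x \<in> \<Omega> \<longleftrightarrow> \<rho> x < 0)
                 \<and> (\<forall>x\<in>V. rgrad \<rho> x > 0) \<and> spsh_on V \<rho>"
    and kbd: "k \<ge> max (2 * CARD('n) + 9) (3 * CARD('n) + 6)"
    and KE: "complete_kaehler \<Omega> w'" "real_analytic_on \<Omega> w'"
            "\<forall>x\<in>\<Omega>. det (cHess w' x) = complex_of_real (exp (real (CARD('n) + 1) * w' x))"
            "\<forall>p\<in>frontier \<Omega>. filterlim w' at_top (at p within \<Omega>)"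
    and U: "open U" "connected U" "bounded U" "q \<in> U"
    and N: "open N" "closure U \<subseteq> N"
    and phi: "Ck_on k N \<phi>" "\<forall>x\<in>N. x \<in> \<Omega> \<longleftrightarrow> \<phi> x < 0" "spsh_on N \<phi>"
             "\<exists>c>0. \<forall>x\<in>closure U. rgrad \<phi> x \<ge> c"
    and phis: "\<forall>m\<in>{1..CARD('n)+1}.
        Ck_cl (k - 2*m) U (\<phi>s m)
      \<and> (\<forall>x\<in>closure U. x \<in> \<Omega> \<longleftrightarrow> on_cl U (\<phi>s m) x < 0)
      \<and> (\<exists>c>0. \<forall>x\<in>closure U. on_cl U (rgrad (\<phi>s m)) x \<ge> c)
      \<and> spsh_cl U (\<phi>s m)
      \<and> (\<forall>x\<in>closure U. \<bar>1 - on_cl U (fefJ (\<lambda>y. - \<phi>s m y)) x\<bar> \<le> 1/2)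
      \<and> (\<exists>G. Ck_cl (k - 2*m - 2) U G \<and>
             (\<forall>x\<in>U. fefJ (\<lambda>y. - \<phi>s m y) x - 1 = G x * (- \<phi> x) ^ m))
      \<and> (\<exists>G. Ck_cl (k - 2*m) U G \<and> (\<forall>x\<in>closure U. on_cl U G x > 0) \<and>
             (\<forall>x\<in>U. \<phi>s m x = G x * \<phi> x))
      \<and> (\<exists>G. Ck_cl (k - 2*m - 2) U G \<and>
             (\<forall>x\<in>U. ln (fefJ (\<lambda>y. - \<phi>s m y) x) = G x * (- \<phi> x) ^ m))"
    and l: "1 \<le> l" "l \<le> CARD('n) + 1"
  shows "Ck_cl (k - 2*l - 3) (\<Omega> \<inter> U)
           (\<lambda>x. gradw (\<lambda>y. - ln (- \<phi>s l y)) (\<lambda>y. ln (fefJ (\<lambda>z. - \<phi>s l z) y)) x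
                 / (- \<phi> x) ^ (2*l - 1))
       \<and> (\<exists>c>0. \<forall>x\<in>\<Omega> \<inter> U.
             gradw (\<lambda>y. - ln (- \<phi>s l y)) (\<lambda>y. ln (fefJ (\<lambda>z. - \<phi>s l z) y)) x
               \<le> c * (- \<phi> x) ^ (2*l - 1))"
proof -
  have lm: "l \<in> {1..CARD('n)+1}" using l by simp
  note P = phis[rule_format, OF lm]
  define r where "r = \<phi>s l"
  have r_regU: "Ck_cl (k - 2*l) U r" using P unfolding r_def by blast
  obtain cg where cg: "cg > 0" "\<forall>x\<in>closure U. on_cl U (rgrad r) x \<ge> cg" using P unfolding r_def by blast
  have sp: "spsh_cl U r" using P unfolding r_def by blast
  obtain G1 where G1: "Ck_cl (k - 2*l - 2) U G1" "\<forall>x\<in>U. ln (fefJ (\<lambda>y. - r y) x) = G1 x * (- \<phi> x) ^ l"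
    using P unfolding r_def by blast
  obtain G2 where G2: "Ck_cl (k - 2*l) U G2" "\<forall>x\<in>closure U. on_cl U G2 x > 0" "\<forall>x\<in>U. r x = G2 x * \<phi> x"
    using P unfolding r_def by blast
  define m where "m = k - 2*l - 3"
  have k1: "k - 2*l = Suc (Suc (Suc m))" and k2: "k - 2*l - 2 = Suc m" and k3: "Suc m \<le> k"
    using kbd l unfolding m_def by auto
  define B where "B = \<Omega> \<inter> U"
  have Bo: "open B" using dom(1) U(1) unfolding B_def by blast
  have BU: "B \<subseteq> U" unfolding B_def by blast
  have cUN: "closure U \<subseteq> N" using N(2) .
  have cBc: "compact (closure B)" using U(3) BU bounded_subset compact_closure by blast
  have \<phi>neg: "\<phi> x < 0" if "x \<in> B" for x
  proof -
    have "x \<in> N" using that BU cUN closure_subset by blast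
    moreover have "x \<in> \<Omega>" using that unfolding B_def by blast
    ultimately show ?thesis using phi(2) by blast
  qed
  have \<phi>U: "Ck_cl k U \<phi>" by (rule Ck_on_cl[OF N(1) N(2) phi(1)])
  have rU: "Ck_cl (Suc (Suc (Suc m))) U r" using r_regU k1 by simp
  have G1U: "Ck_cl (Suc m) U G1" using G1(1) k2 by simp
  have G2U: "Ck_cl m U G2" using Ck_cl_mono[OF _ G2(1)] k1 by simp
  have \<phi>U1: "Ck_cl (Suc m) U \<phi>" by (rule Ck_cl_mono[OF k3 \<phi>U])
  have crU: "Ck_cl (Suc (Suc (Suc m))) U (cplx r)" by (rule Ck_cl_cplx[OF U(1) rU])
  have rz_eq: "rz r i = dz i (cplx r)" for i by (rule ext) (simp add: rz_def)
  have rzb_eq: "rzb r i = dzb i (cplx r)" for i by (rule ext) (simp add: rzb_def)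
  have rH_eq: "(\<lambda>y. rH r y i j) = dz i (rzb r j)" for i j by (rule ext) (simp add: rH_def rzb_def[abs_def])
  have aU: "Ck_cl (Suc (Suc m)) U (rz r i)" for i unfolding rz_eq by (rule Ck_cl_dz(1)[OF U(1) crU])
  have bU: "Ck_cl (Suc (Suc m)) U (rzb r i)" for i unfolding rzb_eq by (rule Ck_cl_dz(2)[OF U(1) crU])
  have HU: "Ck_cl (Suc m) U (\<lambda>y. rH r y i j)" for i j unfolding rH_eq by (rule Ck_cl_dz(1)[OF U(1) bU])
  have pdrU: "Ck_cl (Suc (Suc m)) U (\<lambda>y. frechet_derivative r (at y) v)" for v by (rule Ck_cl_pd[OF U(1) rU])
  have rB: "Ck_cl (Suc (Suc (Suc m))) B r" by (rule Ck_cl_subset[OF BU rU])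
  have G1B: "Ck_cl (Suc m) B G1" by (rule Ck_cl_subset[OF BU G1U])
  have G2B: "Ck_cl m B G2" by (rule Ck_cl_subset[OF BU G2U])
  have \<phi>B: "Ck_cl (Suc m) B \<phi>" by (rule Ck_cl_subset[OF BU \<phi>U1])
  have aB: "Ck_cl (Suc (Suc m)) B (rz r i)" for i by (rule Ck_cl_subset[OF BU aU])
  have bB: "Ck_cl (Suc (Suc m)) B (rzb r i)" for i by (rule Ck_cl_subset[OF BU bU])
  have HB: "Ck_cl (Suc m) B (\<lambda>y. rH r y i j)" for i j by (rule Ck_cl_subset[OF BU HU])
  have rd: "(r has_derivative frechet_derivative r (at z)) (at z)" if "z \<in> B" for z
    by (rule Ck_cl_SucD(2)[OF Bo rB that])
  have bd: "(rzb r j has_derivative frechet_derivative (rzb r j) (at z)) (at z)" if "z \<in> B" for z j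
    by (rule Ck_cl_SucD(2)[OF Bo bB that])
  have G1d: "(G1 has_derivative frechet_derivative G1 (at z)) (at z)" if "z \<in> U" for z
    by (rule Ck_cl_SucD(2)[OF U(1) G1U that])
  have \<phi>d: "(\<phi> has_derivative frechet_derivative \<phi> (at z)) (at z)" if "z \<in> U" for z
    by (rule Ck_cl_SucD(2)[OF U(1) \<phi>U1 that])
  have G2pos: "G2 z > 0" if "z \<in> U" for z
  proof -
    have "on_cl U G2 z = G2 z" by (rule on_cl_eq[OF U(1) that Ck_cl_cont[OF G2(1)]])
    then show ?thesis using G2(2) that closure_subset by force
  qed
  have neg: "r z < 0" if "z \<in> B" for z
  proof -
    have "z \<in> U" using that BU by blast
    then have "r z = G2 z * \<phi> z" "G2 z > 0" using G2(3) G2pos by auto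
    then show ?thesis using \<phi>neg[OF that] by (simp add: mult_pos_neg)
  qed
  define dH where "dH y = det (cHess r y)" for y
  define Hi where "Hi y = hinv (cHess r y)" for y
  define \<beta> where "\<beta> y = (\<Sum>q\<in>UNIV. \<Sum>p\<in>UNIV. rzb r q y * Hi y $q$p * rz r p y)" for y
  define hh where "hh y = complex_of_real (- r y)" for y
  define PP where "PP v y = complex_of_real (frechet_derivative G1 (at y) v * (- \<phi> y) - real l * G1 y * frechet_derivative \<phi> (at y) v)" for v y
  define V where "V i y = (PP (axis i 1) y - \<i> * PP (axis i \<i>) y) / 2" for i y
  define W where "W i y = (PP (axis i 1) y + \<i> * PP (axis i \<i>) y) / 2" for i y
  define S1 where "S1 y = (\<Sum>i\<in>UNIV. \<Sum>j\<in>UNIV. Hi y$i$j * V i y * W j y)" for y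
  define S2 where "S2 y = (\<Sum>i\<in>UNIV. (\<Sum>p\<in>UNIV. Hi y$i$p * rz r p y) * V i y)" for y
  define S3 where "S3 y = (\<Sum>j\<in>UNIV. (\<Sum>q\<in>UNIV. rzb r q y * Hi y$q$j) * W j y)" for y
  define Q where "Q y = Re (complex_of_real (G2 y) * (S1 y - S2 y * S3 y / (\<beta> y + hh y)))" for y
  have cHe: "cHess r y $ p $ q = rH r y p q" for y p q by (simp add: cHess_def)
  have dH_eq: "dH = (\<lambda>y. det (\<chi> p q. rH r y p q))" by (rule ext) (simp add: dH_def cHess_def)
  have Hi_eq: "(\<lambda>y. Hi y $ k $ j) = (\<lambda>y. det (\<chi> p q. if q = k then axis j 1 $ p else rH r y p q) / dH y)" for k j
    by (rule ext) (simp only: Hi_def hinv_def dH_def vec_lambda_beta cHe)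
  have pdrB: "Ck_cl (Suc (Suc m)) B (\<lambda>y. frechet_derivative r (at y) v)" for v by (rule Ck_cl_subset[OF BU pdrU])
  have extl_rgrad: "extl U (rgrad r)"
    unfolding extl_def
  proof
    fix x' assume x': "x' \<in> closure U"
    have "\<forall>v. \<exists>L. ((\<lambda>y. frechet_derivative r (at y) v) \<longlongrightarrow> L) (at x' within U)"
      using Ck_cl_extl[OF pdrU] x' unfolding extl_def by blast
    from choice[OF this] obtain qu where qu: "\<And>v. ((\<lambda>y. frechet_derivative r (at y) v) \<longlongrightarrow> qu v) (at x' within U)" by blast
    have "(rgrad r \<longlongrightarrow> sqrt (\<Sum>j\<in>UNIV. (qu (axis j 1))\<^sup>2 + (qu (axis j \<i>))\<^sup>2)) (at x' within U)"
      unfolding rgrad_def[abs_def] pd_def by (intro tendsto_intros qu)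
    then show "\<exists>L. (rgrad r \<longlongrightarrow> L) (at x' within U)" by blast
  qed
  have lims: "(\<forall>L. (dH \<longlongrightarrow> L) (at x within B) \<longrightarrow> L \<noteq> 0) \<and>
      (\<forall>L. ((\<lambda>y. \<beta> y + hh y) \<longlongrightarrow> L) (at x within B) \<longrightarrow> L \<noteq> 0)" if x: "x \<in> closure B" for x
  proof -
    define FF where "FF = at x within B"
    have nb: "FF \<noteq> bot" unfolding FF_def by (rule nontriv[OF Bo x])
    have "\<forall>v. \<exists>L. ((\<lambda>y. frechet_derivative r (at y) v) \<longlongrightarrow> L) FF"
      using Ck_cl_extl[OF pdrB] x unfolding extl_def FF_def by blast
    from choice[OF this] obtain qv where qv: "\<And>v. ((\<lambda>y. frechet_derivative r (at y) v) \<longlongrightarrow> qv v) FF" by blast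
    have "\<forall>pq. \<exists>L. ((\<lambda>y. rH r y (fst pq) (snd pq)) \<longlongrightarrow> L) FF"
      using Ck_cl_extl[OF HB] x unfolding extl_def FF_def by blast
    from choice[OF this] obtain Hl2 where Hl2: "\<And>pq. ((\<lambda>y. rH r y (fst pq) (snd pq)) \<longlongrightarrow> Hl2 pq) FF" by blast
    define Hl where "Hl = (\<chi> p q. Hl2 (p, q))"
    have HlT: "((\<lambda>y. rH r y p q) \<longlongrightarrow> Hl $ p $ q) FF" for p q using Hl2[of "(p, q)"] unfolding Hl_def by simp
    obtain rl where rl: "(r \<longlongrightarrow> rl) FF" using Ck_cl_extl[OF rB] x unfolding extl_def FF_def by blast
    define al where "al i = (complex_of_real (qv (axis i 1)) - \<i> * complex_of_real (qv (axis i \<i>))) / 2" for i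
    have aT: "(rz r i \<longlongrightarrow> al i) FF" for i
    proof -
      have t1: "((\<lambda>y. (complex_of_real (frechet_derivative r (at y) (axis i 1)) - \<i> * complex_of_real (frechet_derivative r (at y) (axis i \<i>))) / 2) \<longlongrightarrow> al i) FF"
        unfolding al_def by (intro tendsto_intros qv) simp
      have f1: "\<forall>y\<in>B. rz r i y = (complex_of_real (frechet_derivative r (at y) (axis i 1)) - \<i> * complex_of_real (frechet_derivative r (at y) (axis i \<i>))) / 2"
        using rz_formula(1)[OF rd] by blast
      show ?thesis unfolding FF_def by (rule limB[OF f1 t1[unfolded FF_def]])
    qed
    have bT: "(rzb r i \<longlongrightarrow> cnj (al i)) FF" for i
    proof -
      have t1: "((\<lambda>y. (complex_of_real (frechet_derivative r (at y) (axis i 1)) + \<i> * complex_of_real (frechet_derivative r (at y) (axis i \<i>))) / 2) \<longlongrightarrow>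
          (complex_of_real (qv (axis i 1)) + \<i> * complex_of_real (qv (axis i \<i>))) / 2) FF"
        by (intro tendsto_intros qv) simp
      have e1: "(complex_of_real (qv (axis i 1)) + \<i> * complex_of_real (qv (axis i \<i>))) / 2 = cnj (al i)"
        unfolding al_def by (simp add: complex_eq_iff)
      have f1: "\<forall>y\<in>B. rzb r i y = (complex_of_real (frechet_derivative r (at y) (axis i 1)) + \<i> * complex_of_real (frechet_derivative r (at y) (axis i \<i>))) / 2"
        using rz_formula(2)[OF rd] by blast
      show ?thesis unfolding FF_def by (rule limB[OF f1 t1[unfolded e1 FF_def]])
    qed
    have xU: "x \<in> closure U" using x closure_mono[OF BU] by blast
    have ocH: "on_cl U (\<lambda>y. rH r y i j) x = Hl $ i $ j" for i j
      by (rule on_cl_restrict[OF Bo BU x Ck_cl_extl[OF HU] HlT[unfolded FF_def]])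
    have posd: "\<forall>\<xi>::complex^'n. \<xi> \<noteq> 0 \<longrightarrow> Re (\<Sum>i\<in>UNIV. \<Sum>j\<in>UNIV. Hl$i$j * \<xi>$i * cnj (\<xi>$j)) > 0"
    proof -
      have "\<forall>\<xi>::complex^'n. \<xi> \<noteq> 0 \<longrightarrow> Re (\<Sum>i\<in>UNIV. \<Sum>j\<in>UNIV. on_cl U (\<lambda>y. rH r y i j) x * \<xi>$i * cnj (\<xi>$j)) > 0"
        using bspec[OF sp[unfolded spsh_cl_def] xU] .
      then show ?thesis unfolding ocH .
    qed
    have dHT: "(dH \<longlongrightarrow> det Hl) FF"
    proof -
      have "((\<lambda>y. det (\<chi> p q. rH r y p q)) \<longlongrightarrow> det (\<chi> p q. Hl $ p $ q)) FF" by (rule tendsto_det[OF HlT])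
      moreover have "(\<chi> p q. Hl $ p $ q) = Hl" by (simp add: vec_eq_iff)
      ultimately show ?thesis unfolding dH_eq by simp
    qed
    have detnz: "det Hl \<noteq> 0" by (rule posdef_det[OF posd])
    have P1: "\<forall>L. (dH \<longlongrightarrow> L) (at x within B) \<longrightarrow> L \<noteq> 0"
      using tendsto_unique[OF nb dHT] detnz unfolding FF_def by blast
    have rgT: "(rgrad r \<longlongrightarrow> sqrt (\<Sum>j\<in>UNIV. (qv (axis j 1))\<^sup>2 + (qv (axis j \<i>))\<^sup>2)) FF"
      unfolding rgrad_def[abs_def] pd_def by (intro tendsto_intros qv)
    have ocg: "on_cl U (rgrad r) x = sqrt (\<Sum>j\<in>UNIV. (qv (axis j 1))\<^sup>2 + (qv (axis j \<i>))\<^sup>2)"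
      by (rule on_cl_restrict[OF Bo BU x extl_rgrad rgT[unfolded FF_def]])
    have sq: "sqrt (\<Sum>j\<in>UNIV. (qv (axis j 1))\<^sup>2 + (qv (axis j \<i>))\<^sup>2) \<ge> cg"
      using cg(2)[rule_format, OF xU] unfolding ocg .
    define alv where "alv = (\<chi> i. al i)"
    have alnz: "alv \<noteq> 0"
    proof
      assume "alv = 0"
      have "al j = 0" for j
      proof -
        have "alv $ j = 0" using \<open>alv = 0\<close> by simp
        then show ?thesis unfolding alv_def by simp
      qed
      then have "qv (axis j 1) = 0 \<and> qv (axis j \<i>) = 0" for j
        unfolding al_def by (simp add: complex_eq_iff)
      then have "sqrt (\<Sum>j\<in>UNIV. (qv (axis j 1))\<^sup>2 + (qv (axis j \<i>))\<^sup>2) = 0" by simp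
      then show False using sq cg(1) by simp
    qed
    have HiT: "((\<lambda>y. Hi y $ q $ p) \<longlongrightarrow> hinv Hl $ q $ p) FF" for q p
    proof -
      have numT: "((\<lambda>y. if b = q then axis p 1 $ a else rH r y a b) \<longlongrightarrow> (if b = q then axis p 1 $ a else Hl $ a $ b)) FF" for a b
        by (cases "b = q") (simp_all add: HlT)
      have "((\<lambda>y. det (\<chi> a b. if b = q then axis p 1 $ a else rH r y a b) / dH y) \<longlongrightarrow>
          det (\<chi> a b. if b = q then axis p 1 $ a else Hl $ a $ b) / det Hl) FF"
        by (rule tendsto_divide[OF tendsto_det[OF numT] dHT detnz])
      moreover have "hinv Hl $ q $ p = det (\<chi> a b. if b = q then axis p 1 $ a else Hl $ a $ b) / det Hl"
        unfolding hinv_def by simp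
      ultimately show ?thesis using fun_cong[OF Hi_eq[of q p]] by simp
    qed
    have \<beta>T: "(\<beta> \<longlongrightarrow> (\<Sum>q\<in>UNIV. \<Sum>p\<in>UNIV. cnj (alv$q) * hinv Hl $q$p * alv$p)) FF"
    proof -
      have "((\<lambda>y. \<Sum>q\<in>UNIV. \<Sum>p\<in>UNIV. rzb r q y * Hi y $q$p * rz r p y) \<longlongrightarrow> (\<Sum>q\<in>UNIV. \<Sum>p\<in>UNIV. cnj (al q) * hinv Hl $q$p * al p)) FF"
        by (intro tendsto_sum tendsto_mult bT aT HiT)
      then show ?thesis unfolding \<beta>_def[abs_def] alv_def by simp
    qed
    have \<beta>pos: "Re (\<Sum>q\<in>UNIV. \<Sum>p\<in>UNIV. cnj (alv$q) * hinv Hl $q$p * alv$p) > 0"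
      by (rule posdef_beta[OF posd hinv_right[OF detnz] alnz])
    have hhT: "(hh \<longlongrightarrow> complex_of_real (- rl)) FF"
      unfolding hh_def[abs_def] by (intro tendsto_intros rl)
    have rl0: "rl \<le> 0"
    proof (rule tendsto_upperbound[OF rl])
      show "eventually (\<lambda>y. 0 \<ge> r y) FF" unfolding FF_def eventually_at_filter
        by (intro always_eventually allI impI) (simp add: less_imp_le neg)
      show "\<not> trivial_limit FF" using nb by simp
    qed
    have DT: "((\<lambda>y. \<beta> y + hh y) \<longlongrightarrow> (\<Sum>q\<in>UNIV. \<Sum>p\<in>UNIV. cnj (alv$q) * hinv Hl $q$p * alv$p) + complex_of_real (- rl)) FF"
      by (rule tendsto_add[OF \<beta>T hhT])
    have Dl: "(\<Sum>q\<in>UNIV. \<Sum>p\<in>UNIV. cnj (alv$q) * hinv Hl $q$p * alv$p) + complex_of_real (- rl) \<noteq> 0"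
    proof
      assume "(\<Sum>q\<in>UNIV. \<Sum>p\<in>UNIV. cnj (alv$q) * hinv Hl $q$p * alv$p) + complex_of_real (- rl) = 0"
      then have "Re ((\<Sum>q\<in>UNIV. \<Sum>p\<in>UNIV. cnj (alv$q) * hinv Hl $q$p * alv$p) + complex_of_real (- rl)) = 0" by simp
      then show False using \<beta>pos rl0 by simp
    qed
    have P2: "\<forall>L. ((\<lambda>y. \<beta> y + hh y) \<longlongrightarrow> L) (at x within B) \<longrightarrow> L \<noteq> 0"
      using tendsto_unique[OF nb DT] Dl unfolding FF_def by blast
    show ?thesis using P1 P2 by blast
  qed
  have N1: "\<forall>x\<in>closure B. \<forall>L. (dH \<longlongrightarrow> L) (at x within B) \<longrightarrow> L \<noteq> 0" using lims by blast
  have N2: "\<forall>x\<in>closure B. \<forall>L. ((\<lambda>y. \<beta> y + hh y) \<longlongrightarrow> L) (at x within B) \<longrightarrow> L \<noteq> 0" using lims by blast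
  have dHB: "Ck_cl (Suc m) B dH" unfolding dH_eq by (rule Ck_cl_det[OF Bo HB])
  have dHnz: "\<forall>x\<in>B. dH x \<noteq> 0" by (rule nz_from_lim[OF Bo Ck_cl_cont[OF dHB] N1])
  have numB: "Ck_cl (Suc m) B (\<lambda>y. if q = k then axis j 1 $ p else rH r y p q)" for p q k j
    by (cases "q = k") (simp_all add: Ck_cl_const[OF Bo] HB)
  have HiB: "Ck_cl (Suc m) B (\<lambda>y. Hi y $ k $ j)" for k j
    unfolding Hi_eq by (rule Ck_cl_divide[OF Bo dHnz N1 Ck_cl_det[OF Bo numB] dHB])
  have HiBm: "Ck_cl m B (\<lambda>y. Hi y $ k $ j)" for k j by (rule Ck_cl_mono_Suc[OF HiB])
  have aBm: "Ck_cl m B (rz r i)" for i by (rule Ck_cl_mono[OF _ aB]) simp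
  have bBm: "Ck_cl m B (rzb r i)" for i by (rule Ck_cl_mono[OF _ bB]) simp
  have rBm: "Ck_cl m B r" by (rule Ck_cl_mono[OF _ rB]) simp
  have \<beta>B: "Ck_cl m B \<beta>"
  proof -
    have "Ck_cl m B (\<lambda>y. \<Sum>q\<in>UNIV. \<Sum>p\<in>UNIV. rzb r q y * Hi y $q$p * rz r p y)"
      by (intro Ck_cl_sum[OF Bo finite_class.finite_UNIV] Ck_cl_mult[OF Bo] bBm HiBm aBm)
    then show ?thesis unfolding \<beta>_def[abs_def] .
  qed
  have hh_eq: "hh = cplx (\<lambda>y. - r y)" by (rule ext) (simp add: hh_def cplx_def)
  have hhB: "Ck_cl m B hh" unfolding hh_eq by (rule Ck_cl_cplx[OF Bo Ck_cl_uminus[OF Bo rBm]])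
  have DB: "Ck_cl m B (\<lambda>y. \<beta> y + hh y)" by (rule Ck_cl_add[OF Bo \<beta>B hhB])
  have Dnz: "\<forall>x\<in>B. \<beta> x + hh x \<noteq> 0" by (rule nz_from_lim[OF Bo Ck_cl_cont[OF DB] N2])
  have G1Bm: "Ck_cl m B G1" by (rule Ck_cl_mono_Suc[OF G1B])
  have \<phi>Bm: "Ck_cl m B \<phi>" by (rule Ck_cl_mono_Suc[OF \<phi>B])
  have PPB: "Ck_cl m B (PP v)" for v
  proof -
    have "Ck_cl m B (\<lambda>y. frechet_derivative G1 (at y) v * (- \<phi> y) - real l * G1 y * frechet_derivative \<phi> (at y) v)"
      by (rule Ck_cl_diff[OF Bo Ck_cl_mult[OF Bo Ck_cl_pd[OF Bo G1B] Ck_cl_uminus[OF Bo \<phi>Bm]]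
            Ck_cl_mult[OF Bo Ck_cl_cmult[OF Bo G1Bm] Ck_cl_pd[OF Bo \<phi>B]]])
    from Ck_cl_cplx[OF Bo this] show ?thesis unfolding PP_def[abs_def] cplx_def .
  qed
  have VB: "Ck_cl m B (V i)" for i
  proof -
    have "Ck_cl m B (\<lambda>y. (1/2) * (PP (axis i 1) y - \<i> * PP (axis i \<i>) y))"
      by (rule Ck_cl_cmult[OF Bo Ck_cl_diff[OF Bo PPB Ck_cl_cmult[OF Bo PPB]]])
    then show ?thesis unfolding V_def[abs_def] by simp
  qed
  have WB: "Ck_cl m B (W i)" for i
  proof -
    have "Ck_cl m B (\<lambda>y. (1/2) * (PP (axis i 1) y + \<i> * PP (axis i \<i>) y))"
      by (rule Ck_cl_cmult[OF Bo Ck_cl_add[OF Bo PPB Ck_cl_cmult[OF Bo PPB]]])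
    then show ?thesis unfolding W_def[abs_def] by simp
  qed
  have S1B: "Ck_cl m B S1" unfolding S1_def[abs_def]
    by (intro Ck_cl_sum[OF Bo finite_class.finite_UNIV] Ck_cl_mult[OF Bo] HiBm VB WB)
  have S2B: "Ck_cl m B S2" unfolding S2_def[abs_def]
    by (intro Ck_cl_sum[OF Bo finite_class.finite_UNIV] Ck_cl_mult[OF Bo] HiBm VB aBm)
  have S3B: "Ck_cl m B S3" unfolding S3_def[abs_def]
    by (intro Ck_cl_sum[OF Bo finite_class.finite_UNIV] Ck_cl_mult[OF Bo] HiBm WB bBm)
  have QB: "Ck_cl m B Q" unfolding Q_def[abs_def]
    by (rule Ck_cl_Re[OF Bo Ck_cl_mult[OF Bo Ck_cl_cplx[OF Bo G2B, unfolded cplx_def]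
          Ck_cl_diff[OF Bo S1B Ck_cl_divide[OF Bo Dnz N2 Ck_cl_mult[OF Bo S2B S3B] DB]]]])
  have eq: "gradw (\<lambda>y. - ln (- r y)) (\<lambda>y. ln (fefJ (\<lambda>z. - r z) y)) x / (- \<phi> x) ^ (2*l - 1) = Q x"
    if x: "x \<in> B" for x
  proof -
    have xU: "x \<in> U" using x BU by blast
    define t where "t = complex_of_real ((- \<phi> x) ^ (l - 1))"
    define F where "F = (\<lambda>y. ln (fefJ (\<lambda>z. - r z) y))"
    have FU: "\<And>z. z \<in> U \<Longrightarrow> F z = G1 z * (- \<phi> z) ^ l" unfolding F_def using G1(2) by blast
    have rzF: "rz F i x = t * V i x" for i
      unfolding t_def V_def PP_def by (rule rz_F(1)[OF U(1) xU FU l(1) G1d[OF xU] \<phi>d[OF xU]])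
    have rzbF: "rzb F i x = t * W i x" for i
      unfolding t_def W_def PP_def by (rule rz_F(2)[OF U(1) xU FU l(1) G1d[OF xU] \<phi>d[OF xU]])
    define a where "a = (\<chi> i. rz r i x)"
    define b where "b = (\<chi> i. rzb r i x)"
    have hx: "hh x \<noteq> 0" unfolding hh_def using neg[OF x] by simp
    have cHw: "cHess (\<lambda>y. - ln (- r y)) x = (\<chi> i j. cHess r x $i$j / hh x + a$i * b$j / (hh x)^2)"
      unfolding vec_eq_iff
    proof (intro allI)
      fix i j
      show "cHess (\<lambda>y. - ln (- r y)) x $ i $ j = (\<chi> i j. cHess r x $i$j / hh x + a$i * b$j / (hh x)^2) $ i $ j"
        using rH_w[OF Bo x rd neg bd[OF x], of i j] unfolding a_def b_def hh_def by (simp add: cHe cHess_def)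
    qed
    have HH: "cHess r x ** Hi x = mat 1" unfolding Hi_def
      by (rule hinv_right) (use dHnz x in \<open>simp add: dH_def\<close>)
    have \<beta>x: "\<beta> x = (\<Sum>q\<in>UNIV. \<Sum>p\<in>UNIV. b$q * Hi x$q$p * a$p)" unfolding \<beta>_def a_def b_def by simp
    have inv: "matrix_inv (cHess (\<lambda>y. - ln (- r y)) x) =
         (\<chi> i j. hh x * (Hi x$i$j - (\<Sum>p\<in>UNIV. Hi x$i$p * a$p) * (\<Sum>q\<in>UNIV. b$q * Hi x$q$j) / (\<beta> x + hh x)))"
      unfolding cHw by (rule matrix_inv_eq[OF SM_inv[OF HH hx _ \<beta>x]]) (use Dnz x in blast)
    have gw: "gradw (\<lambda>y. - ln (- r y)) F x = Re (t * t * hh x * (S1 x - S2 x * S3 x / (\<beta> x + hh x)))"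
    proof -
      have "gradw (\<lambda>y. - ln (- r y)) F x = Re (\<Sum>i\<in>UNIV. \<Sum>j\<in>UNIV.
          (hh x * (Hi x$i$j - (\<Sum>p\<in>UNIV. Hi x$i$p * rz r p x) * (\<Sum>q\<in>UNIV. rzb r q x * Hi x$q$j) / (\<beta> x + hh x))) * (t * V i x) * (t * W j x))"
        unfolding gradw_def inv rzF rzbF a_def b_def by simp
      also have "\<dots> = Re (t * t * hh x * (S1 x - S2 x * S3 x / (\<beta> x + hh x)))"
        unfolding quad_form S1_def S2_def S3_def ..
      finally show ?thesis .
    qed
    have e: "(- \<phi> x) ^ (2*l - 1) > 0" using \<phi>neg[OF x] by simp
    have tth: "t * t * hh x = complex_of_real (G2 x * (- \<phi> x) ^ (2*l - 1))"
    proof -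
      have "r x = G2 x * \<phi> x" using G2(3) xU by blast
      moreover have "(- \<phi> x) ^ (l - 1) * (- \<phi> x) ^ (l - 1) * (- \<phi> x) = (- \<phi> x) ^ (2*l - 1)"
      proof -
        have ee: "2*l - 1 = (l - 1) + (l - 1) + 1" using l(1) by simp
        show ?thesis unfolding ee by (simp only: power_add power_one_right)
      qed
      ultimately show ?thesis unfolding t_def hh_def
        by (metis (no_types, lifting) mult.assoc mult.commute mult_minus_right of_real_mult)
    qed
    show ?thesis
      unfolding F_def[symmetric] gw tth Q_def by (rule Re_scale[OF e[THEN less_imp_neq, THEN not_sym]])
  qed
  have C1: "Ck_cl m B (\<lambda>x. gradw (\<lambda>y. - ln (- r y)) (\<lambda>y. ln (fefJ (\<lambda>z. - r z) y)) x / (- \<phi> x) ^ (2*l - 1))"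
    by (rule Ck_cl_cong[OF Bo _ QB]) (use eq in simp)
  obtain M where M: "\<forall>y\<in>B. norm (Q y) \<le> M" using extl_bounded[OF cBc Ck_cl_extl[OF QB]] by blast
  have C2: "\<forall>x\<in>B. gradw (\<lambda>y. - ln (- r y)) (\<lambda>y. ln (fefJ (\<lambda>z. - r z) y)) x \<le> (\<bar>M\<bar> + 1) * (- \<phi> x) ^ (2*l - 1)"
  proof
    fix x assume x: "x \<in> B"
    define e where "e = (- \<phi> x) ^ (2*l - 1)"
    have e: "e > 0" unfolding e_def using \<phi>neg[OF x] by simp
    have "gradw (\<lambda>y. - ln (- r y)) (\<lambda>y. ln (fefJ (\<lambda>z. - r z) y)) x = Q x * e"
      using eq[OF x] e unfolding e_def[symmetric] by (simp add: field_simps)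
    also have "\<dots> \<le> (\<bar>M\<bar> + 1) * e"
    proof (rule mult_right_mono)
      show "Q x \<le> \<bar>M\<bar> + 1" using M x by (simp add: abs_le_iff) (smt (verit) abs_ge_self abs_le_iff real_norm_def)
    qed (use e in simp)
    finally show "gradw (\<lambda>y. - ln (- r y)) (\<lambda>y. ln (fefJ (\<lambda>z. - r z) y)) x \<le> (\<bar>M\<bar> + 1) * (- \<phi> x) ^ (2*l - 1)"
      unfolding e_def .
  qed
  have "Ck_cl (k - 2*l - 3) (\<Omega> \<inter> U)
           (\<lambda>x. gradw (\<lambda>y. - ln (- r y)) (\<lambda>y. ln (fefJ (\<lambda>z. - r z) y)) x / (- \<phi> x) ^ (2*l - 1))
       \<and> (\<exists>c>0. \<forall>x\<in>\<Omega> \<inter> U.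
             gradw (\<lambda>y. - ln (- r y)) (\<lambda>y. ln (fefJ (\<lambda>z. - r z) y)) x \<le> c * (- \<phi> x) ^ (2*l - 1))"
  proof
    show "Ck_cl (k - 2*l - 3) (\<Omega> \<inter> U)
           (\<lambda>x. gradw (\<lambda>y. - ln (- r y)) (\<lambda>y. ln (fefJ (\<lambda>z. - r z) y)) x / (- \<phi> x) ^ (2*l - 1))"
      using C1 unfolding m_def B_def .
    have "\<bar>M\<bar> + 1 > 0" by simp
    then show "\<exists>c>0. \<forall>x\<in>\<Omega> \<inter> U.
             gradw (\<lambda>y. - ln (- r y)) (\<lambda>y. ln (fefJ (\<lambda>z. - r z) y)) x \<le> c * (- \<phi> x) ^ (2*l - 1)"
      using C2 unfolding B_def by blast
  qed
  then show ?thesis unfolding r_def .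
qed

end
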